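(* Let $\mathcal{D}$ be a generalised dyadic system, and let $\mu,\nu$ be Radon measures on $\mathbb{R}$ with $\mu$ finite and $\nu$ dyadically doubling relative to $\mathcal{D}$. Let $\mu_a$ be the absolutely continuous part of $\mu$ with respect to $\nu$. Then the square function $$\mathcal{S}^2_{\mathcal{D},\nu}(\mu)(x) := \sum_{I\in\mathcal{D}}\alpha^2_{\mu,\nu}(I)\chi_I(x)$$ is finite for $\mu_a$-almost every $x\in\mathbb{R}$.
   Context: A generalised dyadic system is a family $\mathcal{D}=\bigcup_{k\ge0}\mathcal{D}_k$ of half-open intervals such that each $\mathcal{D}_k$ is a partition of $\mathbb{R}$ into intervals of length $2^{-k}$, and each $I\in\mathcal{D}_k$ is the union of two intervals of $\mathcal{D}_{k+1}$ (its children). $\nu$ is dyadically doubling relative to $\mathcal{D}$ if there is $C$ with $\nu(\hat I)\le C\nu(I)$ for every $I\in\mathcal{D}_k$, $k\ge1$, where $\hat I$ is the interval of $\mathcal{D}_{k-1}$ containing $I$. Wasserstein distance: $\mathbb{W}_1(\nu_1,\nu_2) := \sup_\psi |\int\psi\,d\nu_1 - \int\psi\,d\nu_2|$ over all $1$-Lipschitz $\psi\colon\mathbb{R}\to\mathbb{R}$ supported on $[0,1]$. For an interval $I$, $T_I$ is the increasing affine map taking $\overline I$ onto $[0,1]$, $\mu_I := T_{I\sharp}(\mu|_I)/\mu(I)$, $\nu_I := T_{I\sharp}(\nu|_I)/\nu(I)$ (zero if the mass vanishes), $\alpha_{\mu,\nu}(I) := \mathbb{W}_1(\mu_I,\nu_I)$.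 *)

theory Defs
  imports "HOL-Probability.Probability"
begin

definition dyadic_system :: "(nat \<Rightarrow> real set set) \<Rightarrow> bool" where
  "dyadic_system D \<longleftrightarrow>
     (\<forall>k. (\<forall>I\<in>D k. \<exists>a. I = {a..<a + (1/2)^k}) \<and> (\<forall>x. \<exists>!I. I \<in> D k \<and> x \<in> I)) \<and>
     (\<forall>k. \<forall>I\<in>D k. \<exists>J1 J2. J1 \<in> D (Suc k) \<and> J2 \<in> D (Suc k) \<and> J1 \<noteq> J2 \<and> I = J1 \<union> J2)"

definition radon_measure :: "real measure \<Rightarrow> bool" where
  "radon_measure M \<longleftrightarrow> sets M = sets borel \<and> (\<forall>K. compact K \<longrightarrow> emeasure M K < \<infinity>)"

definition dyadically_doubling :: "(nat \<Rightarrow> real set set) \<Rightarrow> real measure \<Rightarrow> bool" where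
  "dyadically_doubling D nu \<longleftrightarrow>
     (\<exists>C::real. \<forall>k. \<forall>I\<in>D (Suc k). \<forall>J\<in>D k. I \<subseteq> J \<longrightarrow>
        emeasure nu J \<le> ennreal C * emeasure nu I)"

definition T_map :: "real set \<Rightarrow> real \<Rightarrow> real" where
  "T_map I x = (x - Inf I) / (Sup I - Inf I)"

definition normalized_measure :: "real measure \<Rightarrow> real set \<Rightarrow> real measure" where
  "normalized_measure mu I =
     (if emeasure mu I = 0 then null_measure borel
      else scale_measure (inverse (emeasure mu I))
             (distr (density mu (indicator I)) borel (T_map I)))"

definition wasserstein1 :: "real measure \<Rightarrow> real measure \<Rightarrow> real" where
  "wasserstein1 m1 m2 = Sup {\<bar>(\<integral>x. \<psi> x \<partial>m1) - (\<integral>x. \<psi> x \<partial>m2)\<bar> | \<psi>.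
      1-lipschitz_on UNIV \<psi> \<and> (\<forall>x. x \<notin> {0..1} \<longrightarrow> \<psi> x = 0)}"

definition alpha :: "real measure \<Rightarrow> real measure \<Rightarrow> real set \<Rightarrow> real" where
  "alpha mu nu I = wasserstein1 (normalized_measure mu I) (normalized_measure nu I)"

definition square_function ::
  "(nat \<Rightarrow> real set set) \<Rightarrow> real measure \<Rightarrow> real measure \<Rightarrow> real \<Rightarrow> ennreal" where
  "square_function D mu nu x =
     (\<Sum>\<^sub>\<infinity>I\<in>(\<Union>k. D k). ennreal ((alpha mu nu I)^2 * indicator I x))"

definition lebesgue_decomposition ::
  "real measure \<Rightarrow> real measure \<Rightarrow> real measure \<Rightarrow> real measure \<Rightarrow> bool" where
  "lebesgue_decomposition nu mu ma ms \<longleftrightarrow>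
     sets ma = sets borel \<and> sets ms = sets borel \<and>
     absolutely_continuous nu ma \<and>
     (\<exists>N\<in>sets borel. emeasure nu N = 0 \<and> emeasure ms (UNIV - N) = 0) \<and>
     (\<forall>A\<in>sets borel. emeasure mu A = emeasure ma A + emeasure ms A)"

end

theory Submission
  imports Defs
begin


locale dyad =
  fixes D :: "nat \<Rightarrow> real set set"
  assumes dys: "dyadic_system D"
begin

lemma dys_parts:
  "\<forall>k. (\<forall>I\<in>D k. \<exists>a. I = {a..<a + (1/2)^k}) \<and> (\<forall>x. \<exists>!I. I \<in> D k \<and> x \<in> I)"
  "\<forall>k. \<forall>I\<in>D k. \<exists>J1 J2. J1 \<in> D (Suc k) \<and> J2 \<in> D (Suc k) \<and> J1 \<noteq> J2 \<and> I = J1 \<union> J2"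
  using dys unfolding dyadic_system_def by auto

lemma cellE: "I \<in> D k \<Longrightarrow> \<exists>a. I = {a..<a + (1/2)^k}"
  using dys_parts(1) by blast

lemma ex1: "\<exists>!I. I \<in> D k \<and> x \<in> I"
  using dys_parts(1) by blast

lemma cover: "\<exists>I. I \<in> D k \<and> x \<in> I"
  using ex1[of k x] by (rule ex1_implies_ex)

lemma uniq: "I \<in> D k \<Longrightarrow> J \<in> D k \<Longrightarrow> x \<in> I \<Longrightarrow> x \<in> J \<Longrightarrow> I = J"
  using ex1[of k x] by auto

lemma childrenE: "I \<in> D k \<Longrightarrow> \<exists>J1 J2. J1 \<in> D (Suc k) \<and> J2 \<in> D (Suc k) \<and> J1 \<noteq> J2 \<and> I = J1 \<union> J2"
  using dys_parts(2) by blast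

lemma cell_ne: "I \<in> D k \<Longrightarrow> I \<noteq> {}"
  using cellE[of I k] by auto

lemma cell_disj: "I \<in> D k \<Longrightarrow> J \<in> D k \<Longrightarrow> I \<noteq> J \<Longrightarrow> I \<inter> J = {}"
  using uniq[of I k J] by auto

lemma cell_Inf: "I \<in> D k \<Longrightarrow> I = {Inf I..<Inf I + (1/2)^k}"
proof -
  assume "I \<in> D k"
  then obtain a where a: "I = {a..<a + (1/2)^k}" using cellE by blast
  have "Inf I = a" unfolding a by (rule cInf_atLeastLessThan) simp
  then show ?thesis using a by simp
qed

lemma cell_Sup: "I \<in> D k \<Longrightarrow> Sup I = Inf I + (1/2)^k"
proof -
  assume "I \<in> D k"
  then have e: "I = {Inf I..<Inf I + (1/2)^k}" by (rule cell_Inf)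
  have "Sup I = Sup {Inf I..<Inf I + (1/2)^k}" by (rule arg_cong[OF e])
  also have "\<dots> = Inf I + (1/2)^k" by (rule cSup_atLeastLessThan) simp
  finally show ?thesis .
qed

lemma parent_ex: "J \<in> D (Suc k) \<Longrightarrow> \<exists>I\<in>D k. J \<subseteq> I"
proof -
  assume J: "J \<in> D (Suc k)"
  then obtain b where b: "b \<in> J" using cell_ne by blast
  obtain I where I: "I \<in> D k" "b \<in> I" using cover by blast
  obtain J1 J2 where c: "J1 \<in> D (Suc k)" "J2 \<in> D (Suc k)" "I = J1 \<union> J2" using childrenE[OF I(1)] by blast
  have "b \<in> J1 \<or> b \<in> J2" using c(3) I(2) by blast
  then have "J = J1 \<or> J = J2" using uniq[OF J c(1) b] uniq[OF J c(2) b] by blast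
  then have "J \<subseteq> I" using c(3) by auto
  then show ?thesis using I(1) by blast
qed

lemma anc_ex: "J \<in> D (k + n) \<Longrightarrow> \<exists>I\<in>D k. J \<subseteq> I"
proof (induction n arbitrary: J)
  case 0 then have "J \<in> D k" by simp
  then show ?case by (intro bexI[of _ J]) auto
next
  case (Suc n)
  then have "J \<in> D (Suc (k+n))" by simp
  then obtain P where P: "P \<in> D (k+n)" "J \<subseteq> P" using parent_ex[of J "k+n"] by blast
  then obtain I where "I \<in> D k" "P \<subseteq> I" using Suc.IH[OF P(1)] by blast
  then show ?case using P(2) by blast
qed

lemma anc_ex': "J \<in> D m \<Longrightarrow> k \<le> m \<Longrightarrow> \<exists>I\<in>D k. J \<subseteq> I"
proof -
  assume "J \<in> D m" "k \<le> m"
  then have "J \<in> D (k + (m - k))" by simp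
  then show ?thesis by (rule anc_ex)
qed

lemma anc_uniq: "J \<in> D m \<Longrightarrow> I \<in> D k \<Longrightarrow> I' \<in> D k \<Longrightarrow> J \<subseteq> I \<Longrightarrow> J \<subseteq> I' \<Longrightarrow> I = I'"
proof -
  assume a: "J \<in> D m" "I \<in> D k" "I' \<in> D k" "J \<subseteq> I" "J \<subseteq> I'"
  obtain x where x: "x \<in> J" using cell_ne[OF a(1)] by auto
  have "x \<in> I" "x \<in> I'" using x a(4,5) by auto
  then show "I = I'" by (rule uniq[OF a(2) a(3)])
qed

definition desc :: "nat \<Rightarrow> real set \<Rightarrow> nat \<Rightarrow> real set set" where
  "desc k I n = {J \<in> D (k + n). J \<subseteq> I}"

lemma desc_0: assumes I: "I \<in> D k" shows "desc k I 0 = {I}"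
proof
  show "desc k I 0 \<subseteq> {I}"
  proof
    fix J assume "J \<in> desc k I 0"
    then have J: "J \<in> D k" "J \<subseteq> I" by (auto simp: desc_def)
    have "J = I" by (rule anc_uniq[OF J(1) J(1) I subset_refl J(2)])
    then show "J \<in> {I}" by simp
  qed
  show "{I} \<subseteq> desc k I 0" using I by (simp add: desc_def)
qed

lemma desc_trans: assumes I: "I \<in> D k"
  shows "desc k I (m + n) = (\<Union>J\<in>desc k I m. desc (k + m) J n)"
proof
  show "desc k I (m + n) \<subseteq> (\<Union>J\<in>desc k I m. desc (k + m) J n)"
  proof
    fix K assume K: "K \<in> desc k I (m + n)"
    then have K1: "K \<in> D (k+m+n)" "K \<subseteq> I" unfolding desc_def by (auto simp: add.assoc)
    then obtain J where J: "J \<in> D (k+m)" "K \<subseteq> J" using anc_ex by blast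
    obtain I' where I': "I' \<in> D k" "J \<subseteq> I'" using anc_ex[OF J(1)] by blast
    have "I' = I" using anc_uniq[OF K1(1) I'(1) I] J(2) I'(2) K1(2) by blast
    then have "J \<in> desc k I m" using J I' unfolding desc_def by auto
    then show "K \<in> (\<Union>J\<in>desc k I m. desc (k + m) J n)" using K1 J unfolding desc_def by auto
  qed
next
  show "(\<Union>J\<in>desc k I m. desc (k + m) J n) \<subseteq> desc k I (m + n)"
    unfolding desc_def by (auto simp: add.assoc)
qed

lemma desc_sub: "J \<in> desc k I n \<Longrightarrow> J \<in> D (k+n) \<and> J \<subseteq> I"
  unfolding desc_def by auto

lemma desc_1: assumes I: "I \<in> D k"
  shows "\<exists>J1 J2. desc k I 1 = {J1, J2} \<and> J1 \<noteq> J2 \<and> I = J1 \<union> J2 \<and> J1 \<inter> J2 = {}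
           \<and> J1 \<in> D (Suc k) \<and> J2 \<in> D (Suc k)"
proof -
  obtain J1 J2 where c: "J1 \<in> D (Suc k)" "J2 \<in> D (Suc k)" "J1 \<noteq> J2" "I = J1 \<union> J2"
    using childrenE[OF I] by blast
  have "desc k I 1 = {J1, J2}"
  proof
    show "desc k I 1 \<subseteq> {J1, J2}"
    proof
      fix J assume "J \<in> desc k I 1"
      then have J: "J \<in> D (Suc k)" "J \<subseteq> I" unfolding desc_def by auto
      then obtain x where "x \<in> J" using cell_ne by blast
      then show "J \<in> {J1, J2}" using uniq[OF J(1)] c J by blast
    qed
    show "{J1, J2} \<subseteq> desc k I 1" using c unfolding desc_def by auto
  qed
  moreover have "J1 \<inter> J2 = {}" by (rule cell_disj[OF c(1) c(2) c(3)])
  ultimately show ?thesis using c by (intro exI[of _ J1] exI[of _ J2] conjI)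
qed

lemma finite_desc: "I \<in> D k \<Longrightarrow> finite (desc k I n)"
proof (induction n arbitrary: I k)
  case 0 then show ?case by (simp add: desc_0)
next
  case (Suc n)
  have e: "desc k I (1 + n) = (\<Union>J\<in>desc k I 1. desc (k + 1) J n)" by (rule desc_trans[OF Suc.prems])
  obtain J1 J2 where "desc k I 1 = {J1, J2}" "J1 \<in> D (Suc k)" "J2 \<in> D (Suc k)" using desc_1[OF Suc.prems] by blast
  then show ?case using e Suc.IH by (simp add: add.commute)
qed

lemma desc_disj: "J \<in> desc k I n \<Longrightarrow> J' \<in> desc k I n \<Longrightarrow> J \<noteq> J' \<Longrightarrow> J \<inter> J' = {}"
  unfolding desc_def using cell_disj by blast

lemma sum_desc_trans: assumes I: "I \<in> D k"
  shows "(\<Sum>K\<in>desc k I (m + n). f K) = (\<Sum>J\<in>desc k I m. \<Sum>K\<in>desc (k + m) J n. f K)"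
proof -
  have "(\<Sum>K\<in>desc k I (m + n). f K) = (\<Sum>K\<in>(\<Union>J\<in>desc k I m. desc (k + m) J n). f K)"
    using desc_trans[OF I] by simp
  also have "\<dots> = (\<Sum>J\<in>desc k I m. \<Sum>K\<in>desc (k + m) J n. f K)"
  proof (rule sum.UNION_disjoint)
    show "finite (desc k I m)" using finite_desc[OF I] .
    show "\<forall>J\<in>desc k I m. finite (desc (k + m) J n)" using finite_desc desc_sub by blast
    show "\<forall>J\<in>desc k I m. \<forall>J'\<in>desc k I m. J \<noteq> J' \<longrightarrow> desc (k + m) J n \<inter> desc (k + m) J' n = {}"
    proof (intro ballI impI)
      fix J J' assume "J \<in> desc k I m" "J' \<in> desc k I m" "J \<noteq> J'"
      then have "J \<inter> J' = {}" using desc_disj by blast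
      then show "desc (k + m) J n \<inter> desc (k + m) J' n = {}"
        unfolding desc_def using cell_ne by blast
    qed
  qed
  finally show ?thesis .
qed

definition additive :: "(real set \<Rightarrow> 'a::comm_monoid_add) \<Rightarrow> bool" where
  "additive f \<longleftrightarrow> (\<forall>k. \<forall>I\<in>D k. f I = (\<Sum>J\<in>desc k I 1. f J))"

lemma additive_sum: "additive f \<Longrightarrow> I \<in> D k \<Longrightarrow> (\<Sum>J\<in>desc k I n. f J) = f I"
proof (induction n arbitrary: I k)
  case 0 then show ?case by (simp add: desc_0)
next
  case (Suc n)
  have "(\<Sum>J\<in>desc k I (1 + n). f J) = (\<Sum>J\<in>desc k I 1. \<Sum>K\<in>desc (k + 1) J n. f K)"
    by (rule sum_desc_trans[OF Suc.prems(2)])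
  also have "\<dots> = (\<Sum>J\<in>desc k I 1. f J)"
  proof (rule sum.cong[OF refl])
    fix J assume "J \<in> desc k I 1"
    then have "J \<in> D (k+1)" using desc_sub by blast
    then show "(\<Sum>K\<in>desc (k+1) J n. f K) = f J" by (rule Suc.IH[OF Suc.prems(1)])
  qed
  also have "\<dots> = f I" using Suc.prems unfolding additive_def by auto
  finally show ?case by simp
qed

lemma union_desc: "I \<in> D k \<Longrightarrow> \<Union>(desc k I n) = I"
proof (induction n arbitrary: I k)
  case 0 then show ?case by (simp add: desc_0)
next
  case (Suc n)
  have e: "desc k I (1 + n) = (\<Union>J\<in>desc k I 1. desc (k + 1) J n)" by (rule desc_trans[OF Suc.prems])
  obtain J1 J2 where c: "desc k I 1 = {J1, J2}" "J1 \<in> D (Suc k)" "J2 \<in> D (Suc k)" "I = J1 \<union> J2"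
    using desc_1[OF Suc.prems] by blast
  have "\<Union>(desc k I (Suc n)) = \<Union>(desc (Suc k) J1 n) \<union> \<Union>(desc (Suc k) J2 n)"
    using e c(1) by simp
  also have "\<dots> = J1 \<union> J2" using Suc.IH[OF c(2)] Suc.IH[OF c(3)] by simp
  finally show ?case using c(4) by simp
qed

lemma levels_disj: "I \<in> D k \<Longrightarrow> I \<in> D k' \<Longrightarrow> k = k'"
proof -
  assume a: "I \<in> D k" "I \<in> D k'"
  have h1: "Sup I = Inf I + (1/2)^k" by (rule cell_Sup[OF a(1)])
  have h2: "Sup I = Inf I + (1/2)^k'" by (rule cell_Sup[OF a(2)])
  have "(1/2::real)^k = (1/2)^k'" using h1 h2 by linarith
  then show "k = k'" using power_inject_exp'[of "1/2::real" k k'] by simp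
qed

end


context dyad begin

lemma cell_borel: "I \<in> D k \<Longrightarrow> I \<in> sets borel"
  using cellE[of I k] by auto

lemma cell_bounded_sub: "I \<in> D k \<Longrightarrow> I \<subseteq> {Inf I .. Inf I + 1}"
proof -
  assume I: "I \<in> D k"
  have "(1/2::real)^k \<le> 1" by (simp add: power_le_one)
  then show ?thesis using cell_Inf[OF I] by (metis atLeastLessThan_subseteq_atLeastAtMost_iff order.refl
        add_le_cancel_left atLeastLessThan_empty_iff2 empty_subsetI order_trans)
qed

lemma cell_fin: assumes "radon_measure M" "I \<in> D k" shows "emeasure M I < \<infinity>"
proof -
  have "emeasure M I \<le> emeasure M {Inf I .. Inf I + 1}"
    using assms cell_bounded_sub[OF assms(2)] cell_borel[OF assms(2)]
    by (intro emeasure_mono) (auto simp: radon_measure_def)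
  also have "\<dots> < \<infinity>" using assms(1) unfolding radon_measure_def by auto
  finally show ?thesis .
qed

lemma sets_radon: "radon_measure M \<Longrightarrow> sets M = sets borel"
  unfolding radon_measure_def by auto

lemma measure_additive: assumes "radon_measure M" shows "additive (measure M)"
  unfolding additive_def
proof (intro allI ballI)
  fix k I assume I: "I \<in> D k"
  obtain J1 J2 where c: "desc k I 1 = {J1, J2}" "J1 \<noteq> J2" "I = J1 \<union> J2" "J1 \<inter> J2 = {}"
      "J1 \<in> D (Suc k)" "J2 \<in> D (Suc k)" using desc_1[OF I] by blast
  have "measure M (J1 \<union> J2) = measure M J1 + measure M J2"
    using cell_fin[OF assms c(5)] cell_fin[OF assms c(6)] cell_borel[OF c(5)] cell_borel[OF c(6)] c(4)
      sets_radon[OF assms] by (intro measure_Union) auto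
  then show "measure M I = (\<Sum>J\<in>desc k I 1. measure M J)" using c(1,2,3) by simp
qed

end

lemma T_meas: "T_map I \<in> borel_measurable borel"
proof -
  have e: "T_map I = (\<lambda>x. (x - Inf I) * (1 / (Sup I - Inf I)))" unfolding T_map_def by (rule ext) simp
  have "continuous_on UNIV (\<lambda>x. (x - Inf I) * (1 / (Sup I - Inf I)))" by (intro continuous_intros)
  then show ?thesis unfolding e by (rule borel_measurable_continuous_onI)
qed

lemma int_scale:
  fixes f :: "'a \<Rightarrow> real"
  assumes c: "0 \<le> c" and f: "f \<in> borel_measurable N"
  shows "integral\<^sup>L (scale_measure (ennreal c) N) f = c * integral\<^sup>L N f"
proof -
  have e: "scale_measure (ennreal c) N = density N (\<lambda>_. c)"
  proof (rule measure_eqI)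
    show "sets (scale_measure (ennreal c) N) = sets (density N (\<lambda>_. c))" by simp
    fix A assume "A \<in> sets (scale_measure (ennreal c) N)"
    then have A: "A \<in> sets N" by simp
    show "emeasure (scale_measure (ennreal c) N) A = emeasure (density N (\<lambda>_. c)) A"
      using A by (simp add: emeasure_density nn_integral_cmult_indicator)
  qed
  have "integral\<^sup>L (density N (\<lambda>_. c)) f = integral\<^sup>L N (\<lambda>x. c *\<^sub>R f x)"
    by (rule integral_density[OF f]) (auto simp: c)
  then show ?thesis unfolding e by simp
qed

context dyad begin
lemma int_norm:
  assumes M: "radon_measure M" and I: "I \<in> D k" and pos: "0 < measure M I"
    and psi: "\<psi> \<in> borel_measurable borel"
  shows "integral\<^sup>L (normalized_measure M I) \<psi> = inverse (measure M I) * (\<integral>x. indicator I x * \<psi> (T_map I x) \<partial>M)"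
proof -
  have fin: "emeasure M I < \<infinity>" by (rule cell_fin[OF M I])
  have em: "emeasure M I = ennreal (measure M I)" by (rule emeasure_eq_ennreal_measure) (use fin in simp)
  have ne: "emeasure M I \<noteq> 0" using em pos by simp
  have inv: "inverse (emeasure M I) = ennreal (inverse (measure M I))"
    using em pos by (simp add: inverse_ennreal)
  have sM: "sets M = sets borel" by (rule sets_radon[OF M])
  have dens: "density M (indicator I) = density M (\<lambda>x. ennreal (indicator I x :: real))"
    by (simp add: ennreal_indicator)
  have Tm: "T_map I \<in> measurable (density M (indicator I)) borel"
  proof -
    have "measurable (density M (indicator I)) (borel::real measure) = measurable borel borel"
      by (rule measurable_cong_sets) (auto simp: sM)
    then show ?thesis using T_meas by simp
  qed
  have psi': "\<psi> \<in> borel_measurable (distr (density M (indicator I)) borel (T_map I))"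
  proof -
    have "measurable (distr (density M (indicator I)) borel (T_map I)) (borel::real measure) = measurable borel borel"
      by (rule measurable_cong_sets) auto
    then show ?thesis using psi by simp
  qed
  have nm: "normalized_measure M I = scale_measure (ennreal (inverse (measure M I))) (distr (density M (indicator I)) borel (T_map I))"
    unfolding normalized_measure_def using ne inv by simp
  have "integral\<^sup>L (normalized_measure M I) \<psi>
      = inverse (measure M I) * integral\<^sup>L (distr (density M (indicator I)) borel (T_map I)) \<psi>"
    unfolding nm by (rule int_scale[OF _ psi']) (use pos in simp)
  also have "integral\<^sup>L (distr (density M (indicator I)) borel (T_map I)) \<psi>
      = integral\<^sup>L (density M (indicator I)) (\<lambda>x. \<psi> (T_map I x))"
    by (rule integral_distr[OF Tm psi])
  also have "\<dots> = integral\<^sup>L M (\<lambda>x. indicator I x *\<^sub>R \<psi> (T_map I x))"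
    unfolding dens
  proof (rule integral_density)
    have bM: "borel_measurable M = borel_measurable (borel::real measure)"
      by (rule measurable_cong_sets[OF sM refl])
    show "(\<lambda>x. \<psi> (T_map I x)) \<in> borel_measurable M"
      unfolding bM using measurable_comp[OF T_meas psi] by (simp add: comp_def)
    show "(indicator I :: real \<Rightarrow> real) \<in> borel_measurable M"
      unfolding bM using cell_borel[OF I] by simp
    show "AE x in M. 0 \<le> (indicator I x :: real)" by simp
  qed
  finally show ?thesis by simp
qed
end


definition lip01 :: "(real \<Rightarrow> real) \<Rightarrow> bool" where
  "lip01 \<psi> \<longleftrightarrow> 1-lipschitz_on UNIV \<psi> \<and> (\<forall>x. x \<notin> {0..1} \<longrightarrow> \<psi> x = 0)"

lemma lip01_D: "lip01 \<psi> \<Longrightarrow> \<bar>\<psi> a - \<psi> b\<bar> \<le> \<bar>a - b\<bar>"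
  unfolding lip01_def using lipschitz_onD[of 1 UNIV \<psi> a b] by (simp add: dist_real_def)

lemma lip01_bound: assumes "lip01 \<psi>" shows "\<bar>\<psi> t\<bar> \<le> 2"
proof (cases "t \<in> {0..1}")
  case True
  have z: "\<psi> (-1) = 0" using assms unfolding lip01_def by auto
  have "\<bar>\<psi> t - \<psi> (-1)\<bar> \<le> \<bar>t - (-1)\<bar>" by (rule lip01_D[OF assms])
  then show ?thesis using True z by auto
next
  case False then show ?thesis using assms unfolding lip01_def by auto
qed

lemma lip01_meas: assumes "lip01 \<psi>" shows "\<psi> \<in> borel_measurable borel"
proof -
  have "continuous_on UNIV \<psi>" using assms unfolding lip01_def
    by (intro lipschitz_on_continuous_on) auto
  then show ?thesis by (rule borel_measurable_continuous_onI)
qed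

context dyad begin

lemma T_cell: assumes I: "I \<in> D k" and J: "J \<in> desc k I n" and x: "x \<in> J"
  shows "0 \<le> T_map I x - T_map I (Inf J)" "T_map I x - T_map I (Inf J) \<le> (1/2)^n"
proof -
  have JD: "J \<in> D (k+n)" using desc_sub[OF J] by simp
  have xJ: "Inf J \<le> x" "x < Inf J + (1/2)^(k+n)" using x cell_Inf[OF JD] by (metis atLeastLessThan_iff)+
  have d: "Sup I - Inf I = (1/2)^k" using cell_Sup[OF I] by simp
  have "T_map I x - T_map I (Inf J) = (x - Inf I) / (Sup I - Inf I) - (Inf J - Inf I) / (Sup I - Inf I)"
    unfolding T_map_def by simp
  also have "\<dots> = (x - Inf J) / (Sup I - Inf I)" by (simp add: diff_divide_distrib)
  also have "\<dots> = (x - Inf J) * 2^k" unfolding d by (simp add: power_one_over)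
  finally have e: "T_map I x - T_map I (Inf J) = (x - Inf J) * 2^k" .
  show "0 \<le> T_map I x - T_map I (Inf J)" unfolding e using xJ by simp
  have "(x - Inf J) * 2^k \<le> (1/2)^(k+n) * 2^k" using xJ by (intro mult_right_mono) auto
  also have "\<dots> = (1/2)^n" by (simp add: power_add field_simps power_one_over)
  finally show "T_map I x - T_map I (Inf J) \<le> (1/2)^n" unfolding e .
qed

lemma integrable_cell:
  fixes g :: "real \<Rightarrow> real"
  assumes M: "radon_measure M" and J: "J \<in> D m" and g: "g \<in> borel_measurable borel" and b: "\<And>x. \<bar>g x\<bar> \<le> B"
  shows "integrable M (\<lambda>x. indicator J x * g x)"
proof -
  have sM: "sets M = sets borel" by (rule sets_radon[OF M])
  have bM: "borel_measurable M = borel_measurable (borel::real measure)"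
    by (rule measurable_cong_sets[OF sM refl])
  have JM: "J \<in> sets M" using cell_borel[OF J] sM by simp
  have i: "integrable M (\<lambda>x. B * indicator J x :: real)"
    using cell_fin[OF M J] JM by simp
  have m: "(\<lambda>x. indicator J x * g x) \<in> borel_measurable M"
    unfolding bM using cell_borel[OF J] g by simp
  have ae: "AE x in M. norm (indicator J x * g x) \<le> norm (B * indicator J x)"
  proof (rule AE_I2)
    fix x
    have "0 \<le> B" using b[of x] by linarith
    then show "norm (indicator J x * g x) \<le> norm (B * indicator J x)"
      using b[of x] by (auto simp: indicator_def)
  qed
  show ?thesis by (rule Bochner_Integration.integrable_bound[OF i m ae])
qed

lemma additive_int:
  fixes g :: "real \<Rightarrow> real"
  assumes M: "radon_measure M" and g: "g \<in> borel_measurable borel" and b: "\<And>x. \<bar>g x\<bar> \<le> B"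
  shows "additive (\<lambda>J. \<integral>x. indicator J x * g x \<partial>M)"
  unfolding additive_def
proof (intro allI ballI)
  fix k I assume I: "I \<in> D k"
  obtain J1 J2 where c: "desc k I 1 = {J1, J2}" "J1 \<noteq> J2" "I = J1 \<union> J2" "J1 \<inter> J2 = {}"
      "J1 \<in> D (Suc k)" "J2 \<in> D (Suc k)" using desc_1[OF I] by blast
  have ind: "\<And>x. indicator I x * g x = indicator J1 x * g x + indicator J2 x * g x"
  proof -
    fix x
    have "indicator I x = (indicator J1 x + indicator J2 x :: real)"
      using c(3,4) by (auto simp: indicator_def)
    then show "indicator I x * g x = indicator J1 x * g x + indicator J2 x * g x"
      by (simp add: distrib_right)
  qed
  have "(\<integral>x. indicator I x * g x \<partial>M) = (\<integral>x. indicator J1 x * g x \<partial>M) + (\<integral>x. indicator J2 x * g x \<partial>M)"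
    unfolding ind using integrable_cell[OF M c(5) g b] integrable_cell[OF M c(6) g b] by simp
  then show "(\<integral>x. indicator I x * g x \<partial>M) = (\<Sum>J\<in>desc k I 1. \<integral>x. indicator J x * g x \<partial>M)"
    using c(1,2) by simp
qed

lemma approx_cell:
  assumes M: "radon_measure M" and I: "I \<in> D k" and J: "J \<in> desc k I n" and psi: "lip01 \<psi>"
  shows "\<bar>(\<integral>x. indicator J x * \<psi> (T_map I x) \<partial>M) - \<psi> (T_map I (Inf J)) * measure M J\<bar> \<le> (1/2)^n * measure M J"
proof -
  have JD: "J \<in> D (k+n)" using desc_sub[OF J] by simp
  have sM: "sets M = sets borel" by (rule sets_radon[OF M])
  have JM: "J \<in> sets M" using cell_borel[OF JD] sM by simp
  have fin: "emeasure M J < \<infinity>" by (rule cell_fin[OF M JD])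
  have pm: "(\<lambda>x. \<psi> (T_map I x)) \<in> borel_measurable borel"
    using measurable_comp[OF T_meas lip01_meas[OF psi]] by (simp add: comp_def)
  have i1: "integrable M (\<lambda>x. indicator J x * \<psi> (T_map I x))"
    by (rule integrable_cell[OF M JD pm lip01_bound[OF psi]])
  have i2: "integrable M (\<lambda>x. indicator J x * \<psi> (T_map I (Inf J)))"
    using JM fin by simp
  have sp: "space M = UNIV" using sets_eq_imp_space_eq[OF sM] by simp
  have e2: "(\<integral>x. indicator J x * \<psi> (T_map I (Inf J)) \<partial>M) = \<psi> (T_map I (Inf J)) * measure M J"
    using JM sp by (simp add: mult.commute)
  have "(\<integral>x. indicator J x * \<psi> (T_map I x) \<partial>M) - \<psi> (T_map I (Inf J)) * measure M J
      = (\<integral>x. indicator J x * \<psi> (T_map I x) - indicator J x * \<psi> (T_map I (Inf J)) \<partial>M)"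
    using i1 i2 e2 sp by simp
  also have "\<bar>\<dots>\<bar> \<le> (\<integral>x. (1/2)^n * indicator J x \<partial>M)"
  proof (rule integral_abs_bound_integral)
    show "integrable M (\<lambda>x. indicator J x * \<psi> (T_map I x) - indicator J x * \<psi> (T_map I (Inf J)))"
      using i1 i2 by simp
    show "integrable M (\<lambda>x. (1/2)^n * indicator J x :: real)" using JM fin by simp
    fix x
    show "\<bar>indicator J x * \<psi> (T_map I x) - indicator J x * \<psi> (T_map I (Inf J))\<bar> \<le> (1/2)^n * indicator J x"
    proof (cases "x \<in> J")
      case True
      have "\<bar>\<psi> (T_map I x) - \<psi> (T_map I (Inf J))\<bar> \<le> \<bar>T_map I x - T_map I (Inf J)\<bar>"
        by (rule lip01_D[OF psi])
      also have "\<dots> \<le> (1/2)^n" using T_cell[OF I J True] by simp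
      finally show ?thesis using True by simp
    qed simp
  qed
  also have "\<dots> = (1/2)^n * measure M J" using JM sp by simp
  finally show ?thesis .
qed

lemma approx_int:
  assumes M: "radon_measure M" and I: "I \<in> D k" and psi: "lip01 \<psi>"
  shows "\<bar>(\<integral>x. indicator I x * \<psi> (T_map I x) \<partial>M) - (\<Sum>J\<in>desc k I n. \<psi> (T_map I (Inf J)) * measure M J)\<bar>
     \<le> (1/2)^n * measure M I"
proof -
  have pm: "(\<lambda>x. \<psi> (T_map I x)) \<in> borel_measurable borel"
    using measurable_comp[OF T_meas lip01_meas[OF psi]] by (simp add: comp_def)
  have "(\<integral>x. indicator I x * \<psi> (T_map I x) \<partial>M) = (\<Sum>J\<in>desc k I n. \<integral>x. indicator J x * \<psi> (T_map I x) \<partial>M)"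
    using additive_sum[OF additive_int[OF M pm lip01_bound[OF psi]] I] by simp
  then have "\<bar>(\<integral>x. indicator I x * \<psi> (T_map I x) \<partial>M) - (\<Sum>J\<in>desc k I n. \<psi> (T_map I (Inf J)) * measure M J)\<bar>
      = \<bar>\<Sum>J\<in>desc k I n. (\<integral>x. indicator J x * \<psi> (T_map I x) \<partial>M) - \<psi> (T_map I (Inf J)) * measure M J\<bar>"
    by (simp add: sum_subtractf)
  also have "\<dots> \<le> (\<Sum>J\<in>desc k I n. \<bar>(\<integral>x. indicator J x * \<psi> (T_map I x) \<partial>M) - \<psi> (T_map I (Inf J)) * measure M J\<bar>)"
    by (rule sum_abs)
  also have "\<dots> \<le> (\<Sum>J\<in>desc k I n. (1/2)^n * measure M J)"
    by (rule sum_mono) (rule approx_cell[OF M I _ psi])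
  also have "\<dots> = (1/2)^n * measure M I"
    using additive_sum[OF measure_additive[OF M] I, of n] by (simp add: sum_distrib_left[symmetric])
  finally show ?thesis .
qed

end


context dyad begin

definition Phi :: "real measure \<Rightarrow> real set \<Rightarrow> nat \<Rightarrow> (real \<Rightarrow> real) \<Rightarrow> nat \<Rightarrow> real" where
  "Phi M I k \<psi> n = (\<Sum>J\<in>desc k I n. \<psi> (T_map I (Inf J)) * measure M J / measure M I)"

lemma norm_approx:
  assumes M: "radon_measure M" and I: "I \<in> D k" and pos: "0 < measure M I" and psi: "lip01 \<psi>"
  shows "\<bar>integral\<^sup>L (normalized_measure M I) \<psi> - Phi M I k \<psi> n\<bar> \<le> (1/2)^n"
proof -
  have e1: "integral\<^sup>L (normalized_measure M I) \<psi> = inverse (measure M I) * (\<integral>x. indicator I x * \<psi> (T_map I x) \<partial>M)"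
    by (rule int_norm[OF M I pos lip01_meas[OF psi]])
  have e2: "Phi M I k \<psi> n = inverse (measure M I) * (\<Sum>J\<in>desc k I n. \<psi> (T_map I (Inf J)) * measure M J)"
    unfolding Phi_def by (simp add: sum_distrib_left divide_inverse mult.commute)
  have "\<bar>integral\<^sup>L (normalized_measure M I) \<psi> - Phi M I k \<psi> n\<bar>
      = inverse (measure M I) * \<bar>(\<integral>x. indicator I x * \<psi> (T_map I x) \<partial>M) - (\<Sum>J\<in>desc k I n. \<psi> (T_map I (Inf J)) * measure M J)\<bar>"
    unfolding e1 e2 using pos by (simp add: right_diff_distrib[symmetric] abs_mult)
  also have "\<dots> \<le> inverse (measure M I) * ((1/2)^n * measure M I)"
    using approx_int[OF M I psi, of n] pos by (intro mult_left_mono) auto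
  also have "\<dots> = (1/2)^n" using pos by simp
  finally show ?thesis .
qed

definition acoef :: "real measure \<Rightarrow> real measure \<Rightarrow> real set \<Rightarrow> real set \<Rightarrow> real" where
  "acoef M N I J = measure M J / measure M I - measure N J / measure N I"

lemma acoef_additive:
  assumes M: "radon_measure M" and N: "radon_measure N"
  shows "additive (acoef M N I)"
  unfolding additive_def
proof (intro allI ballI)
  fix k J assume J: "J \<in> D k"
  have a: "measure M J = (\<Sum>K\<in>desc k J 1. measure M K)" "measure N J = (\<Sum>K\<in>desc k J 1. measure N K)"
    using additive_sum[OF measure_additive[OF M] J, of 1] additive_sum[OF measure_additive[OF N] J, of 1] by simp_all
  show "acoef M N I J = (\<Sum>K\<in>desc k J 1. acoef M N I K)"
    unfolding acoef_def a by (simp add: sum_subtractf sum_divide_distrib)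
qed

lemma Inf_in: "J \<in> D m \<Longrightarrow> Inf J \<in> J"
proof -
  assume J: "J \<in> D m"
  have "J = {Inf J..<Inf J + (1/2)^m}" by (rule cell_Inf[OF J])
  moreover have "Inf J \<in> {Inf J..<Inf J + (1/2)^m}" by simp
  ultimately show ?thesis by simp
qed

lemma Phi_diff:
  "Phi M I k \<psi> n - Phi N I k \<psi> n = (\<Sum>J\<in>desc k I n. \<psi> (T_map I (Inf J)) * acoef M N I J)"
  unfolding Phi_def acoef_def by (simp add: sum_subtractf right_diff_distrib)

definition bcoef :: "real measure \<Rightarrow> real measure \<Rightarrow> real set \<Rightarrow> nat \<Rightarrow> nat \<Rightarrow> real" where
  "bcoef M N I k n = (\<Sum>J\<in>desc k I n. \<bar>acoef M N I J\<bar>)"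

lemma Phi_step:
  assumes M: "radon_measure M" and N: "radon_measure N" and I: "I \<in> D k" and psi: "lip01 \<psi>"
  shows "\<bar>(Phi M I k \<psi> (Suc n) - Phi N I k \<psi> (Suc n)) - (Phi M I k \<psi> n - Phi N I k \<psi> n)\<bar>
     \<le> (1/2)^n * bcoef M N I k (Suc n)"
proof -
  let ?c = "\<lambda>J. \<psi> (T_map I (Inf J))"
  let ?a = "acoef M N I"
  have add: "additive ?a" by (rule acoef_additive[OF M N])
  have s1: "(\<Sum>J\<in>desc k I (Suc n). ?c J * ?a J) = (\<Sum>J\<in>desc k I n. \<Sum>K\<in>desc (k+n) J 1. ?c K * ?a K)"
    using sum_desc_trans[OF I, of "\<lambda>J. ?c J * ?a J" n 1] by simp
  have s2: "(\<Sum>J\<in>desc k I n. ?c J * ?a J) = (\<Sum>J\<in>desc k I n. \<Sum>K\<in>desc (k+n) J 1. ?c J * ?a K)"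
  proof (rule sum.cong[OF refl])
    fix J assume "J \<in> desc k I n"
    then have "J \<in> D (k+n)" using desc_sub by blast
    then have "?a J = (\<Sum>K\<in>desc (k+n) J 1. ?a K)" using add unfolding additive_def by blast
    then show "?c J * ?a J = (\<Sum>K\<in>desc (k+n) J 1. ?c J * ?a K)" by (simp add: sum_distrib_left)
  qed
  have "\<bar>(Phi M I k \<psi> (Suc n) - Phi N I k \<psi> (Suc n)) - (Phi M I k \<psi> n - Phi N I k \<psi> n)\<bar>
      = \<bar>\<Sum>J\<in>desc k I n. \<Sum>K\<in>desc (k+n) J 1. (?c K - ?c J) * ?a K\<bar>"
    unfolding Phi_diff s1 s2 by (simp add: sum_subtractf left_diff_distrib)
  also have "\<dots> \<le> (\<Sum>J\<in>desc k I n. \<bar>\<Sum>K\<in>desc (k+n) J 1. (?c K - ?c J) * ?a K\<bar>)" by (rule sum_abs)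
  also have "\<dots> \<le> (\<Sum>J\<in>desc k I n. \<Sum>K\<in>desc (k+n) J 1. (1/2)^n * \<bar>?a K\<bar>)"
  proof (rule sum_mono)
    fix J assume J: "J \<in> desc k I n"
    have "\<bar>\<Sum>K\<in>desc (k+n) J 1. (?c K - ?c J) * ?a K\<bar> \<le> (\<Sum>K\<in>desc (k+n) J 1. \<bar>(?c K - ?c J) * ?a K\<bar>)"
      by (rule sum_abs)
    also have "\<dots> \<le> (\<Sum>K\<in>desc (k+n) J 1. (1/2)^n * \<bar>?a K\<bar>)"
    proof (rule sum_mono)
      fix K assume K: "K \<in> desc (k+n) J 1"
      have KD: "K \<in> D (k + n + 1)" "K \<subseteq> J" using desc_sub[OF K] by auto
      have "Inf K \<in> J" using Inf_in[OF KD(1)] KD(2) by blast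
      then have t: "0 \<le> T_map I (Inf K) - T_map I (Inf J)" "T_map I (Inf K) - T_map I (Inf J) \<le> (1/2)^n"
        using T_cell[OF I J] by auto
      have "\<bar>?c K - ?c J\<bar> \<le> \<bar>T_map I (Inf K) - T_map I (Inf J)\<bar>" by (rule lip01_D[OF psi])
      also have "\<dots> \<le> (1/2)^n" using t by simp
      finally have "\<bar>?c K - ?c J\<bar> \<le> (1/2)^n" .
      then show "\<bar>(?c K - ?c J) * ?a K\<bar> \<le> (1/2)^n * \<bar>?a K\<bar>"
        by (simp add: abs_mult mult_right_mono)
    qed
    finally show "\<bar>\<Sum>K\<in>desc (k+n) J 1. (?c K - ?c J) * ?a K\<bar> \<le> (\<Sum>K\<in>desc (k+n) J 1. (1/2)^n * \<bar>?a K\<bar>)" .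
  qed
  also have "\<dots> = (1/2)^n * bcoef M N I k (Suc n)"
    unfolding bcoef_def using sum_desc_trans[OF I, of "\<lambda>K. \<bar>?a K\<bar>" n 1]
    by (simp add: sum_distrib_left)
  finally show ?thesis .
qed

lemma Phi_diff_bound:
  assumes M: "radon_measure M" and N: "radon_measure N" and I: "I \<in> D k" and psi: "lip01 \<psi>"
    and pM: "0 < measure M I" and pN: "0 < measure N I"
  shows "\<bar>Phi M I k \<psi> n - Phi N I k \<psi> n\<bar> \<le> (\<Sum>i<n. (1/2)^i * bcoef M N I k (Suc i))"
proof (induction n)
  case 0
  have "Phi M I k \<psi> 0 - Phi N I k \<psi> 0 = 0"
    unfolding Phi_diff acoef_def desc_0[OF I] using pM pN by simp
  then show ?case by simp
next
  case (Suc n)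
  have "\<bar>Phi M I k \<psi> (Suc n) - Phi N I k \<psi> (Suc n)\<bar>
      \<le> \<bar>(Phi M I k \<psi> (Suc n) - Phi N I k \<psi> (Suc n)) - (Phi M I k \<psi> n - Phi N I k \<psi> n)\<bar> + \<bar>Phi M I k \<psi> n - Phi N I k \<psi> n\<bar>"
    by linarith
  also have "\<dots> \<le> (1/2)^n * bcoef M N I k (Suc n) + (\<Sum>i<n. (1/2)^i * bcoef M N I k (Suc i))"
    using Phi_step[OF M N I psi, of n] Suc.IH by linarith
  finally show ?case by simp
qed

lemma psi_diff_bound:
  assumes M: "radon_measure M" and N: "radon_measure N" and I: "I \<in> D k" and psi: "lip01 \<psi>"
    and pM: "0 < measure M I" and pN: "0 < measure N I"
  shows "\<bar>integral\<^sup>L (normalized_measure M I) \<psi> - integral\<^sup>L (normalized_measure N I) \<psi>\<bar>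
     \<le> (\<Sum>i<n. (1/2)^i * bcoef M N I k (Suc i)) + 2 * (1/2)^n"
  using norm_approx[OF M I pM psi, of n] norm_approx[OF N I pN psi, of n]
    Phi_diff_bound[OF M N I psi pM pN, of n] by linarith

lemma alpha_bound:
  assumes M: "radon_measure M" and N: "radon_measure N" and I: "I \<in> D k"
    and pM: "0 < measure M I" and pN: "0 < measure N I"
  shows "alpha M N I \<le> (\<Sum>i<n. (1/2)^i * bcoef M N I k (Suc i)) + 2 * (1/2)^n"
    and "0 \<le> alpha M N I"
proof -
  let ?S = "{\<bar>(\<integral>x. \<psi> x \<partial>normalized_measure M I) - (\<integral>x. \<psi> x \<partial>normalized_measure N I)\<bar> :: real | \<psi>.
      1-lipschitz_on UNIV \<psi> \<and> (\<forall>x. x \<notin> {0..1} \<longrightarrow> \<psi> x = 0)}"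
  let ?B = "(\<Sum>i<n. (1/2)^i * bcoef M N I k (Suc i)) + 2 * (1/2)^n"
  have z: "0 \<in> ?S"
  proof -
    define \<psi>0 :: "real \<Rightarrow> real" where "\<psi>0 = (\<lambda>x. 0)"
    have l: "1-lipschitz_on UNIV \<psi>0" by (auto simp: lipschitz_on_def \<psi>0_def)
    have o: "\<forall>x. x \<notin> {0..1} \<longrightarrow> \<psi>0 x = 0" by (simp add: \<psi>0_def)
    have e: "\<bar>(\<integral>x. \<psi>0 x \<partial>normalized_measure M I) - (\<integral>x. \<psi>0 x \<partial>normalized_measure N I)\<bar> = 0"
      by (simp add: \<psi>0_def)
    show ?thesis using l o e[symmetric] by blast
  qed
  have ub: "\<And>y. y \<in> ?S \<Longrightarrow> y \<le> ?B"
  proof -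
    fix y assume "y \<in> ?S"
    then obtain \<psi> where y: "y = \<bar>(\<integral>x. \<psi> x \<partial>normalized_measure M I) - (\<integral>x. \<psi> x \<partial>normalized_measure N I)\<bar>"
      and p: "lip01 \<psi>" unfolding lip01_def by blast
    show "y \<le> ?B" unfolding y by (rule psi_diff_bound[OF M N I p pM pN])
  qed
  have "Sup ?S \<le> ?B" using z ub by (intro cSup_least) auto
  then show "alpha M N I \<le> ?B" unfolding alpha_def wasserstein1_def .
  have "bdd_above ?S" using ub by (auto simp: bdd_above_def)
  then have "0 \<le> Sup ?S" using z by (intro cSup_upper2[of 0]) auto
  then show "0 \<le> alpha M N I" unfolding alpha_def wasserstein1_def .
qed

end


context dyad begin

lemma desc_in: "J \<in> desc 0 Q n \<Longrightarrow> K \<in> desc n J m \<Longrightarrow> K \<in> desc 0 Q (n+m)"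
  unfolding desc_def by auto

lemma lvl_additive_sum:
  assumes add: "\<And>n J. J \<in> desc 0 Q n \<Longrightarrow> f n J = (\<Sum>K\<in>desc n J 1. f (Suc n) K)"
    and J: "J \<in> desc 0 Q n"
  shows "(\<Sum>K\<in>desc n J m. f (n+m) K) = f n J"
proof (induction m)
  case 0
  have "J \<in> D n" using desc_sub[OF J] by simp
  then show ?case by (simp add: desc_0)
next
  case (Suc m)
  have JD: "J \<in> D n" using desc_sub[OF J] by simp
  have "(\<Sum>K\<in>desc n J (m + 1). f (n + Suc m) K) = (\<Sum>K'\<in>desc n J m. \<Sum>K\<in>desc (n+m) K' 1. f (n + Suc m) K)"
    by (rule sum_desc_trans[OF JD])
  also have "\<dots> = (\<Sum>K'\<in>desc n J m. f (n+m) K')"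
  proof (rule sum.cong[OF refl])
    fix K' assume "K' \<in> desc n J m"
    then have "K' \<in> desc 0 Q (n+m)" by (rule desc_in[OF J])
    then show "(\<Sum>K\<in>desc (n+m) K' 1. f (n + Suc m) K) = f (n+m) K'" using add by simp
  qed
  finally show ?case using Suc.IH by simp
qed

definition par :: "nat \<Rightarrow> real set \<Rightarrow> real set" where
  "par n J = (THE P. P \<in> D n \<and> J \<subseteq> P)"

lemma par_eq: assumes "J \<in> D m" "P \<in> D n" "J \<subseteq> P" shows "par n J = P"
  unfolding par_def
proof (rule the_equality)
  show "P \<in> D n \<and> J \<subseteq> P" using assms by simp
  fix P' assume "P' \<in> D n \<and> J \<subseteq> P'"
  then show "P' = P" using anc_uniq[OF assms(1) _ assms(2) _ assms(3)] by blast
qed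

lemma par_prop: assumes "J \<in> D m" "n \<le> m" shows "par n J \<in> D n" "J \<subseteq> par n J"
proof -
  obtain P where P: "P \<in> D n" "J \<subseteq> P" using anc_ex'[OF assms] by blast
  then show "par n J \<in> D n" "J \<subseteq> par n J" using par_eq[OF assms(1) P] by simp_all
qed

lemma par_desc: assumes Q: "Q \<in> D 0" and J: "J \<in> desc 0 Q (Suc n)"
  shows "par n J \<in> desc 0 Q n" "J \<in> desc n (par n J) 1"
proof -
  have JD: "J \<in> D (Suc n)" "J \<subseteq> Q" using desc_sub[OF J] by auto
  have p: "par n J \<in> D n" "J \<subseteq> par n J" using par_prop[OF JD(1)] by auto
  obtain Q' where Q': "Q' \<in> D 0" "par n J \<subseteq> Q'" using anc_ex'[OF p(1), of 0] by auto
  have "Q' = Q" using anc_uniq[OF JD(1) Q'(1) Q] p(2) Q'(2) JD(2) by blast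
  then show "par n J \<in> desc 0 Q n" using p Q' unfolding desc_def by simp
  show "J \<in> desc n (par n J) 1" using p JD unfolding desc_def by simp
qed

lemma par_child: "J \<in> D n \<Longrightarrow> K \<in> desc n J 1 \<Longrightarrow> par n K = J"
  using desc_sub[of K n J 1] par_eq[of K "n+1" J n] by auto

lemma par_trans: assumes "J \<in> D m" "k \<le> n" "n \<le> m" shows "par k (par n J) = par k J"
proof -
  have p: "par n J \<in> D n" "J \<subseteq> par n J" using par_prop[OF assms(1) assms(3)] by auto
  have q: "par k (par n J) \<in> D k" "par n J \<subseteq> par k (par n J)" using par_prop[OF p(1) assms(2)] by auto
  show ?thesis using par_eq[OF assms(1) q(1)] p(2) q(2) by auto
qed

end

locale mainloc = dyad +
  fixes mu nu :: "real measure" and Q :: "real set" and C dl M :: real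
  assumes rmu: "radon_measure mu" and rnu: "radon_measure nu"
    and dbl: "\<And>k J P. J \<in> D (Suc k) \<Longrightarrow> P \<in> D k \<Longrightarrow> J \<subseteq> P \<Longrightarrow> measure nu P \<le> C * measure nu J"
    and C1: "1 \<le> C" and Q: "Q \<in> D 0" and dl: "0 < dl" and dlM: "dl \<le> M"
    and gQ: "0 < measure nu Q" "dl \<le> measure mu Q / measure nu Q" "measure mu Q / measure nu Q \<le> M"
begin

definition r :: "real set \<Rightarrow> real" where "r J = measure mu J / measure nu J"

definition good :: "real set \<Rightarrow> bool" where
  "good J \<longleftrightarrow> 0 < measure nu J \<and> dl \<le> r J \<and> r J \<le> M"

primrec inT :: "nat \<Rightarrow> real set \<Rightarrow> bool" where
  "inT 0 J \<longleftrightarrow> J = Q \<and> good Q"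
| "inT (Suc n) J \<longleftrightarrow> J \<in> desc 0 Q (Suc n) \<and> good J \<and> inT n (par n J)"

primrec rho :: "nat \<Rightarrow> real set \<Rightarrow> real" where
  "rho 0 J = r J"
| "rho (Suc n) J = (if inT n (par n J) then r J else rho n (par n J))"

lemma inT_desc: "inT n J \<Longrightarrow> J \<in> desc 0 Q n"
  by (cases n) (auto simp: desc_0[OF Q])

lemma inT_good: "inT n J \<Longrightarrow> good J"
  by (cases n) auto

lemma inT_rho: "inT n J \<Longrightarrow> rho n J = r J"
  by (cases n) auto

lemma mu_nonneg: "0 \<le> measure mu J" by simp
lemma r_nonneg: "0 \<le> r J" unfolding r_def by simp

lemma good_mu: "good J \<Longrightarrow> measure mu J = r J * measure nu J"
  unfolding good_def r_def by simp

lemma child_pos: assumes "good J" "J \<in> D n" "K \<in> desc n J 1" shows "0 < measure nu K"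
proof -
  have K: "K \<in> D (Suc n)" "K \<subseteq> J" using desc_sub[OF assms(3)] by auto
  have "0 < measure nu J" using assms(1) unfolding good_def by simp
  also have "\<dots> \<le> C * measure nu K" by (rule dbl[OF K(1) assms(2) K(2)])
  finally show ?thesis using C1 by (simp add: zero_less_mult_iff)
qed

lemma rho_additive: assumes J: "J \<in> desc 0 Q n"
  shows "rho n J * measure nu J = (\<Sum>K\<in>desc n J 1. rho (Suc n) K * measure nu K)"
proof -
  have JD: "J \<in> D n" using desc_sub[OF J] by simp
  have pc: "\<And>K. K \<in> desc n J 1 \<Longrightarrow> par n K = J" by (rule par_child[OF JD])
  show ?thesis
  proof (cases "inT n J")
    case True
    have g: "good J" by (rule inT_good[OF True])
    have "(\<Sum>K\<in>desc n J 1. rho (Suc n) K * measure nu K) = (\<Sum>K\<in>desc n J 1. measure mu K)"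
    proof (rule sum.cong[OF refl])
      fix K assume K: "K \<in> desc n J 1"
      have "0 < measure nu K" by (rule child_pos[OF g JD K])
      then show "rho (Suc n) K * measure nu K = measure mu K" using pc[OF K] True by (simp add: r_def)
    qed
    also have "\<dots> = measure mu J" using additive_sum[OF measure_additive[OF rmu] JD, of 1] by simp
    also have "\<dots> = rho n J * measure nu J" using good_mu[OF g] inT_rho[OF True] by simp
    finally show ?thesis by simp
  next
    case False
    have "(\<Sum>K\<in>desc n J 1. rho (Suc n) K * measure nu K) = (\<Sum>K\<in>desc n J 1. rho n J * measure nu K)"
      using pc False by (intro sum.cong) auto
    also have "\<dots> = rho n J * measure nu J"
      using additive_sum[OF measure_additive[OF rnu] JD, of 1] by (simp add: sum_distrib_left[symmetric])
    finally show ?thesis by simp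
  qed
qed

lemma rho_sum: "J \<in> desc 0 Q n \<Longrightarrow> (\<Sum>K\<in>desc n J m. rho (n+m) K * measure nu K) = rho n J * measure nu J"
  by (rule lvl_additive_sum[where f = "\<lambda>n K. rho n K * measure nu K"]) (auto simp: rho_additive)

definition R :: real where "R = C * M"

lemma good_Q: "good Q" unfolding good_def r_def using gQ by simp

lemma cell_mono: assumes "radon_measure N" "J \<in> D m" "P \<in> D n" "J \<subseteq> P"
  shows "measure N J \<le> measure N P"
proof (rule measure_mono_fmeasurable[OF assms(4)])
  have s: "sets N = sets borel" by (rule sets_radon[OF assms(1)])
  show "J \<in> sets N" using cell_borel[OF assms(2)] s by simp
  show "P \<in> fmeasurable N" using cell_borel[OF assms(3)] s cell_fin[OF assms(1,3)]
    by (simp add: fmeasurable_def)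
qed

lemma MR: "M \<le> R"
  unfolding R_def using C1 dl dlM by (simp add: mult_le_cancel_right1)

lemma rho_bounds: "J \<in> desc 0 Q n \<Longrightarrow> 0 \<le> rho n J \<and> rho n J \<le> R"
proof (induction n arbitrary: J)
  case 0
  have JQ: "J = Q" using 0 desc_0[OF Q] by simp
  have "r Q \<le> M" using good_Q unfolding good_def by simp
  then show ?case using JQ r_nonneg MR by simp
next
  case (Suc n)
  let ?P = "par n J"
  have P: "?P \<in> desc 0 Q n" "J \<in> desc n ?P 1" using par_desc[OF Q Suc.prems] by auto
  have PD: "?P \<in> D n" using desc_sub[OF P(1)] by simp
  have JD: "J \<in> D (Suc n)" "J \<subseteq> ?P" using desc_sub[OF P(2)] by auto
  show ?case
  proof (cases "inT n ?P")
    case False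
    then show ?thesis using Suc.IH[OF P(1)] by simp
  next
    case True
    have g: "good ?P" by (rule inT_good[OF True])
    have "r J \<le> R"
    proof (cases "measure nu J = 0")
      case True then show ?thesis using MR dl dlM by (simp add: r_def)
    next
      case False
      then have nJ: "0 < measure nu J" using measure_nonneg[of nu J] by linarith
      have nP: "0 < measure nu ?P" using g unfolding good_def by simp
      have d: "measure nu ?P \<le> C * measure nu J" by (rule dbl[OF JD(1) PD JD(2)])
      have m: "measure mu J \<le> measure mu ?P" by (rule cell_mono[OF rmu JD(1) PD JD(2)])
      have "r J = measure mu J / measure nu J" by (simp add: r_def)
      also have "\<dots> \<le> measure mu ?P / measure nu J" using m nJ by (simp add: divide_right_mono)
      also have "\<dots> \<le> C * (measure mu ?P / measure nu ?P)"
      proof -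
        have "measure mu ?P * measure nu ?P \<le> measure mu ?P * (C * measure nu J)"
          using d by (simp add: mult_left_mono)
        then show ?thesis using nJ nP by (simp add: field_simps)
      qed
      also have "\<dots> \<le> C * M"
      proof -
        have "measure mu ?P / measure nu ?P \<le> M" using g unfolding good_def r_def by simp
        then show ?thesis using C1 by (intro mult_left_mono) auto
      qed
      finally show ?thesis by (simp add: R_def)
    qed
    then show ?thesis using True r_nonneg by simp
  qed
qed

lemma rho_dl: "inT n J \<Longrightarrow> dl \<le> rho n J"
  using inT_rho inT_good unfolding good_def by auto

end


lemma weighted_CS:
  fixes w x :: "'a \<Rightarrow> real"
  assumes "\<And>i. i \<in> S \<Longrightarrow> 0 \<le> w i"
  shows "(\<Sum>i\<in>S. w i * x i)^2 \<le> (\<Sum>i\<in>S. w i) * (\<Sum>i\<in>S. w i * (x i)^2)"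
proof -
  have "(\<Sum>i\<in>S. w i * x i)^2 = (\<Sum>i\<in>S. sqrt (w i) * (sqrt (w i) * x i))^2"
    using assms by (intro arg_cong[where f="\<lambda>t. t^2"] sum.cong refl)
      (simp add: real_sqrt_mult_self mult.assoc[symmetric])
  also have "\<dots> \<le> (\<Sum>i\<in>S. (sqrt (w i))^2) * (\<Sum>i\<in>S. (sqrt (w i) * x i)^2)"
    by (rule Cauchy_Schwarz_ineq_sum)
  also have "\<dots> = (\<Sum>i\<in>S. w i) * (\<Sum>i\<in>S. w i * (x i)^2)"
    using assms by (simp add: power_mult_distrib)
  finally show ?thesis .
qed

lemma telescope_bound:
  fixes y :: "nat \<Rightarrow> real"
  assumes "\<And>n. a \<le> y n" "\<And>n. y n \<le> b"
  shows "(\<Sum>k<N. y (k+i) - y k) \<le> real i * (b - a)"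
proof -
  have "(\<Sum>k<N. y (k+i) - y k) = (\<Sum>k<N. \<Sum>j<i. y (k + Suc j) - y (k + j))"
  proof (rule sum.cong[OF refl])
    fix k
    show "y (k+i) - y k = (\<Sum>j<i. y (k + Suc j) - y (k + j))"
      using sum_lessThan_telescope[of "\<lambda>j. y (k + j)" i] by simp
  qed
  also have "\<dots> = (\<Sum>j<i. \<Sum>k<N. y (k + Suc j) - y (k + j))" by (rule sum.swap)
  also have "\<dots> = (\<Sum>j<i. y (N + j) - y j)"
  proof (rule sum.cong[OF refl])
    fix j
    show "(\<Sum>k<N. y (k + Suc j) - y (k + j)) = y (N + j) - y j"
      using sum_lessThan_telescope[of "\<lambda>k. y (k + j)" N] by simp
  qed
  also have "\<dots> \<le> (\<Sum>j<i. b - a)"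
    by (rule sum_mono) (use assms in \<open>smt (verit)\<close>)
  also have "\<dots> = real i * (b - a)" by simp
  finally show ?thesis .
qed

lemma geom_sum_half: "(\<Sum>i<N. (1/2::real)^i) = 2 - 2 * (1/2)^N"
  by (induction N) (auto simp: field_simps)

lemma geom_sum_i: "(\<Sum>i<N. (1/2::real)^i * real i) = 2 - 2 * (real N + 1) * (1/2)^N"
proof (induction N)
  case 0 then show ?case by simp
next
  case (Suc N)
  have "(\<Sum>i<Suc N. (1/2::real)^i * real i) = (2 - 2 * (real N + 1) * (1/2)^N) + (1/2)^N * real N"
    using Suc.IH by simp
  also have "\<dots> = 2 - 2 * (real (Suc N) + 1) * ((1/2) * (1/2)^N)" by (simp add: algebra_simps)
  also have "\<dots> = 2 - 2 * (real (Suc N) + 1) * (1/2)^(Suc N)" by simp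
  finally show ?case .
qed
lemma geom_sum_i_le: "(\<Sum>i<N. (1/2::real)^i * real i) \<le> 2"
  using geom_sum_i[of N] by simp

lemma geom_sum_le: "(\<Sum>i<N. (1/2::real)^i) \<le> 2"
  using geom_sum_half[of N] by simp

lemma N_half_le: "real N * (1/2::real)^N \<le> 1"
proof -
  have "0 \<le> (\<Sum>i<N. (1/2::real)^i * real i)" by (intro sum_nonneg) auto
  then have a: "2 * (real N + 1) * (1/2::real)^N \<le> 2" using geom_sum_i[of N] by simp
  have "2 * (real N + 1) * (1/2::real)^N = 2 * ((real N + 1) * (1/2::real)^N)" by simp
  then have "(real N + 1) * (1/2::real)^N \<le> 1" using a by linarith
  moreover have "real N * (1/2::real)^N \<le> (real N + 1) * (1/2::real)^N" by (intro mult_right_mono) auto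
  ultimately show ?thesis by linarith
qed

context mainloc begin

definition V :: "real set \<Rightarrow> nat \<Rightarrow> nat \<Rightarrow> real" where
  "V J n m = (\<Sum>K\<in>desc n J m. measure nu K * (rho (n+m) K - rho n J)^2)"

definition H :: "nat \<Rightarrow> real" where "H m = V Q 0 m"

lemma V_nonneg: "0 \<le> V J n m"
  unfolding V_def by (intro sum_nonneg) simp

lemma pyth: assumes J: "J \<in> desc 0 Q n"
  shows "(\<Sum>K\<in>desc n J m. measure nu K * (rho (n+m) K - c)^2) = V J n m + measure nu J * (rho n J - c)^2"
proof -
  have JD: "J \<in> D n" using desc_sub[OF J] by simp
  let ?b = "rho n J"
  have s1: "(\<Sum>K\<in>desc n J m. measure nu K) = measure nu J"
    by (rule additive_sum[OF measure_additive[OF rnu] JD])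
  have s2: "(\<Sum>K\<in>desc n J m. rho (n+m) K * measure nu K) = ?b * measure nu J"
    by (rule rho_sum[OF J])
  have "(\<Sum>K\<in>desc n J m. measure nu K * (rho (n+m) K - c)^2)
     = (\<Sum>K\<in>desc n J m. measure nu K * (rho (n+m) K - ?b)^2
          + (2 * (?b - c)) * (rho (n+m) K * measure nu K) + (?b - c)^2 * measure nu K - (2 * (?b - c) * ?b) * measure nu K)"
    by (intro sum.cong refl) (simp add: power2_eq_square algebra_simps)
  also have "\<dots> = V J n m + (2 * (?b - c)) * (?b * measure nu J) + (?b - c)^2 * measure nu J - (2 * (?b - c) * ?b) * measure nu J"
    unfolding V_def by (simp add: sum.distrib sum_subtractf sum_distrib_left[symmetric] s1 s2)
  also have "\<dots> = V J n m + measure nu J * (rho n J - c)^2" by (simp add: algebra_simps)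
  finally show ?thesis .
qed

lemma H_split: "(\<Sum>J\<in>desc 0 Q k. V J k i) = H (k+i) - H k"
proof -
  have "H (k+i) = (\<Sum>K\<in>desc 0 Q (k+i). measure nu K * (rho (k+i) K - rho 0 Q)^2)"
    unfolding H_def V_def by simp
  also have "\<dots> = (\<Sum>J\<in>desc 0 Q k. \<Sum>K\<in>desc k J i. measure nu K * (rho (k+i) K - rho 0 Q)^2)"
    using sum_desc_trans[OF Q, of "\<lambda>K. measure nu K * (rho (k+i) K - rho 0 Q)^2" k i] by simp
  also have "\<dots> = (\<Sum>J\<in>desc 0 Q k. V J k i + measure nu J * (rho k J - rho 0 Q)^2)"
    by (intro sum.cong refl) (rule pyth)
  also have "\<dots> = (\<Sum>J\<in>desc 0 Q k. V J k i) + H k"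
    unfolding H_def V_def by (simp add: sum.distrib)
  finally show ?thesis by simp
qed

lemma H_bounds: "0 \<le> H m" "H m \<le> R^2 * measure nu Q"
proof -
  show "0 \<le> H m" unfolding H_def by (rule V_nonneg)
  have Q0: "Q \<in> desc 0 Q 0" using desc_0[OF Q] by simp
  have bQ: "0 \<le> rho 0 Q" "rho 0 Q \<le> R" using rho_bounds[OF Q0] by auto
  have "H m \<le> (\<Sum>K\<in>desc 0 Q m. measure nu K * R^2)"
    unfolding H_def V_def
  proof (rule sum_mono)
    fix K assume K: "K \<in> desc 0 Q m"
    have b: "0 \<le> rho (0+m) K" "rho (0+m) K \<le> R" using rho_bounds[of K m] K by auto
    have "\<bar>rho (0+m) K - rho 0 Q\<bar> \<le> R" using b bQ by linarith
    then have "(rho (0+m) K - rho 0 Q)^2 \<le> R^2"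
      by (metis abs_le_square_iff abs_of_nonneg b(1) order.trans abs_ge_zero)
    then show "measure nu K * (rho (0+m) K - rho 0 Q)^2 \<le> measure nu K * R^2"
      by (intro mult_left_mono) auto
  qed
  also have "\<dots> = R^2 * measure nu Q"
    using additive_sum[OF measure_additive[OF rnu] Q, of m] by (simp add: sum_distrib_right[symmetric] mult.commute)
  finally show "H m \<le> R^2 * measure nu Q" .
qed

lemma inT_anc: "inT (k+i) P \<Longrightarrow> inT k (par k P)"
proof (induction i arbitrary: P)
  case 0
  have "P \<in> D k" using desc_sub[OF inT_desc[OF 0[simplified]]] by simp
  then have "par k P = P" using par_eq[of P k P k] by simp
  then show ?case using 0 by simp
next
  case (Suc i)
  have h: "P \<in> desc 0 Q (Suc (k+i))" "inT (k+i) (par (k+i) P)" using Suc.prems by auto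
  have PD: "P \<in> D (Suc (k+i))" using desc_sub[OF h(1)] by simp
  have "inT k (par k (par (k+i) P))" by (rule Suc.IH[OF h(2)])
  moreover have "par k (par (k+i) P) = par k P" by (rule par_trans[OF PD]) auto
  ultimately show ?case by simp
qed

definition Z :: "nat \<Rightarrow> real" where
  "Z m = (\<Sum>P\<in>desc 0 Q m. if inT m P then measure mu P else 0)"

definition X :: "real set \<Rightarrow> nat \<Rightarrow> nat \<Rightarrow> real" where
  "X I k i = (\<Sum>P\<in>desc k I i. if inT (k+i) P then measure mu P else 0)"

lemma Z_split: "(\<Sum>I\<in>desc 0 Q k. if inT k I then X I k i else 0) = Z (k+i)"
proof -
  have "(\<Sum>I\<in>desc 0 Q k. if inT k I then X I k i else 0) = (\<Sum>I\<in>desc 0 Q k. X I k i)"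
  proof (rule sum.cong[OF refl])
    fix I assume I: "I \<in> desc 0 Q k"
    have ID: "I \<in> D k" using desc_sub[OF I] by simp
    show "(if inT k I then X I k i else 0) = X I k i"
    proof (cases "inT k I")
      case False
      have "X I k i = 0" unfolding X_def
      proof (intro sum.neutral ballI)
        fix P assume P: "P \<in> desc k I i"
        have PD: "P \<in> D (k+i)" "P \<subseteq> I" using desc_sub[OF P] by auto
        have "par k P = I" by (rule par_eq[OF PD(1) ID PD(2)])
        then show "(if inT (k+i) P then measure mu P else 0) = 0" using inT_anc[of k i P] False by auto
      qed
      then show ?thesis by simp
    qed simp
  qed
  also have "\<dots> = Z (k+i)" unfolding X_def Z_def
    using sum_desc_trans[OF Q, of "\<lambda>P. if inT (k+i) P then measure mu P else 0" k i] by simp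
  finally show ?thesis .
qed

lemma Z_bounds: "0 \<le> Z m" "Z m \<le> measure mu Q"
proof -
  show "0 \<le> Z m" unfolding Z_def by (intro sum_nonneg) auto
  have "Z m \<le> (\<Sum>P\<in>desc 0 Q m. measure mu P)" unfolding Z_def by (intro sum_mono) auto
  also have "\<dots> = measure mu Q" by (rule additive_sum[OF measure_additive[OF rmu] Q])
  finally show "Z m \<le> measure mu Q" .
qed

lemma Z_k: "(\<Sum>I\<in>desc 0 Q k. if inT k I then measure mu I else 0) = Z k"
  unfolding Z_def ..

end


context mainloc begin

definition bt :: "real set \<Rightarrow> nat \<Rightarrow> nat \<Rightarrow> real" where
  "bt I k n = (\<Sum>J\<in>desc k I n. \<bar>rho (k+n) J * measure nu J / measure mu I - measure nu J / measure nu I\<bar>)"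

definition err :: "real set \<Rightarrow> nat \<Rightarrow> nat \<Rightarrow> real" where
  "err I k n = (\<Sum>J\<in>desc k I n. \<bar>measure mu J - rho (k+n) J * measure nu J\<bar>)"

lemma inT_pos: assumes "inT k I" shows "0 < measure nu I" "0 < measure mu I"
    "measure mu I = rho k I * measure nu I" "dl \<le> rho k I"
proof -
  have g: "good I" by (rule inT_good[OF assms])
  show n: "0 < measure nu I" using g unfolding good_def by simp
  show e: "measure mu I = rho k I * measure nu I" using good_mu[OF g] inT_rho[OF assms] by simp
  show d: "dl \<le> rho k I" by (rule rho_dl[OF assms])
  show "0 < measure mu I" using e n d dl by simp
qed

lemma bcoef_split: assumes T: "inT k I"
  shows "bcoef mu nu I k n \<le> bt I k n + err I k n / measure mu I"
proof -
  have m: "0 < measure mu I" using inT_pos[OF T] by simp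
  have "bcoef mu nu I k n \<le> (\<Sum>J\<in>desc k I n. \<bar>rho (k+n) J * measure nu J / measure mu I - measure nu J / measure nu I\<bar>
      + \<bar>measure mu J - rho (k+n) J * measure nu J\<bar> / measure mu I)"
    unfolding bcoef_def acoef_def
  proof (rule sum_mono)
    fix J
    have eq: "measure mu J / measure mu I - measure nu J / measure nu I
       = (rho (k+n) J * measure nu J / measure mu I - measure nu J / measure nu I)
         + (measure mu J - rho (k+n) J * measure nu J) / measure mu I"
      by (simp add: diff_divide_distrib)
    have t: "\<bar>(rho (k+n) J * measure nu J / measure mu I - measure nu J / measure nu I)
         + (measure mu J - rho (k+n) J * measure nu J) / measure mu I\<bar>
       \<le> \<bar>rho (k+n) J * measure nu J / measure mu I - measure nu J / measure nu I\<bar>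
         + \<bar>(measure mu J - rho (k+n) J * measure nu J) / measure mu I\<bar>"
      by (rule abs_triangle_ineq)
    have bb: "\<bar>(measure mu J - rho (k+n) J * measure nu J) / measure mu I\<bar>
       = \<bar>measure mu J - rho (k+n) J * measure nu J\<bar> / measure mu I"
      using m by (simp add: abs_divide)
    show "\<bar>measure mu J / measure mu I - measure nu J / measure nu I\<bar>
      \<le> \<bar>rho (k+n) J * measure nu J / measure mu I - measure nu J / measure nu I\<bar>
         + \<bar>measure mu J - rho (k+n) J * measure nu J\<bar> / measure mu I"
      unfolding eq using t bb by linarith
  qed
  also have "\<dots> = bt I k n + err I k n / measure mu I"
    unfolding bt_def err_def by (simp add: sum.distrib sum_divide_distrib)
  finally show ?thesis .
qed

lemma bt_bound: assumes T: "inT k I"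
  shows "measure mu I * (bt I k n)^2 \<le> V I k n / dl"
proof -
  note p = inT_pos[OF T]
  let ?a = "rho k I" and ?nI = "measure nu I"
  have apos: "0 < ?a" using p(4) dl by simp
  have ID: "I \<in> D k" using desc_sub[OF inT_desc[OF T]] by simp
  define w where "w J = measure nu J / ?nI" for J
  define x where "x J = \<bar>rho (k+n) J - ?a\<bar> / ?a" for J
  have w0: "\<And>J. 0 \<le> w J" unfolding w_def using p by simp
  have wsum: "(\<Sum>J\<in>desc k I n. w J) = 1"
    unfolding w_def using additive_sum[OF measure_additive[OF rnu] ID, of n] p
    by (simp add: sum_divide_distrib[symmetric])
  have bt_eq: "bt I k n = (\<Sum>J\<in>desc k I n. w J * x J)"
    unfolding bt_def
  proof (rule sum.cong[OF refl])
    fix J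
    have "rho (k+n) J * measure nu J / measure mu I - measure nu J / ?nI
        = w J * ((rho (k+n) J - ?a) / ?a)"
      unfolding w_def p(3) using p apos by (simp add: field_simps)
    then show "\<bar>rho (k+n) J * measure nu J / measure mu I - measure nu J / ?nI\<bar> = w J * x J"
      unfolding x_def using w0[of J] apos by (simp add: abs_mult abs_divide)
  qed
  have "(bt I k n)^2 \<le> (\<Sum>J\<in>desc k I n. w J) * (\<Sum>J\<in>desc k I n. w J * (x J)^2)"
    unfolding bt_eq by (rule weighted_CS) (rule w0)
  also have "\<dots> = (\<Sum>J\<in>desc k I n. w J * (x J)^2)" using wsum by simp
  finally have b2: "(bt I k n)^2 \<le> (\<Sum>J\<in>desc k I n. w J * (x J)^2)" .
  have "measure mu I * (bt I k n)^2 \<le> measure mu I * (\<Sum>J\<in>desc k I n. w J * (x J)^2)"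
    using b2 p by (intro mult_left_mono) auto
  also have "\<dots> = V I k n / ?a"
    unfolding V_def sum_distrib_left sum_divide_distrib
  proof (rule sum.cong[OF refl])
    fix J
    show "measure mu I * (w J * (x J)^2) = measure nu J * (rho (k+n) J - ?a)^2 / ?a"
      unfolding p(3) w_def x_def using p apos by (simp add: field_simps power2_eq_square)
  qed
  also have "\<dots> \<le> V I k n / dl"
    using V_nonneg[of I k n] p(4) dl by (intro divide_left_mono) auto
  finally show ?thesis .
qed

lemma err_bound: assumes T: "inT k I"
  shows "err I k (Suc i) \<le> 2 * (measure mu I - X I k i)"
proof -
  have I: "I \<in> desc 0 Q k" by (rule inT_desc[OF T])
  have ID: "I \<in> D k" using desc_sub[OF I] by simp
  note p = inT_pos[OF T]
  let ?g = "\<lambda>P. measure mu P + rho (k+i) P * measure nu P - 2 * (if inT (k+i) P then measure mu P else 0)"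
  have "err I k (Suc i) = (\<Sum>P\<in>desc k I i. \<Sum>J\<in>desc (k+i) P 1. \<bar>measure mu J - rho (Suc (k+i)) J * measure nu J\<bar>)"
    unfolding err_def using sum_desc_trans[OF ID, of "\<lambda>J. \<bar>measure mu J - rho (Suc (k+i)) J * measure nu J\<bar>" i 1]
    by simp
  also have "\<dots> \<le> (\<Sum>P\<in>desc k I i. ?g P)"
  proof (rule sum_mono)
    fix P assume P: "P \<in> desc k I i"
    have PQ: "P \<in> desc 0 Q (k+i)" by (rule desc_in[OF I P])
    have PD: "P \<in> D (k+i)" using desc_sub[OF P] by simp
    show "(\<Sum>J\<in>desc (k+i) P 1. \<bar>measure mu J - rho (Suc (k+i)) J * measure nu J\<bar>) \<le> ?g P"
    proof (cases "inT (k+i) P")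
      case True
      have "(\<Sum>J\<in>desc (k+i) P 1. \<bar>measure mu J - rho (Suc (k+i)) J * measure nu J\<bar>) = 0"
      proof (intro sum.neutral ballI)
        fix J assume J: "J \<in> desc (k+i) P 1"
        have "par (k+i) J = P" by (rule par_child[OF PD J])
        then have "rho (Suc (k+i)) J = r J" using True by simp
        moreover have "0 < measure nu J" by (rule child_pos[OF inT_good[OF True] PD J])
        ultimately show "\<bar>measure mu J - rho (Suc (k+i)) J * measure nu J\<bar> = 0" by (simp add: r_def)
      qed
      moreover have "?g P = 0" using True good_mu[OF inT_good[OF True]] inT_rho[OF True] by simp
      ultimately show ?thesis by simp
    next
      case False
      have "(\<Sum>J\<in>desc (k+i) P 1. \<bar>measure mu J - rho (Suc (k+i)) J * measure nu J\<bar>)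
          \<le> (\<Sum>J\<in>desc (k+i) P 1. measure mu J + rho (Suc (k+i)) J * measure nu J)"
      proof (rule sum_mono)
        fix J assume J: "J \<in> desc (k+i) P 1"
        have "J \<in> desc 0 Q (k+i+1)" by (rule desc_in[OF PQ J])
        then have JQ: "J \<in> desc 0 Q (Suc (k+i))" by simp
        have "0 \<le> rho (Suc (k+i)) J" using rho_bounds[OF JQ] by (rule conjunct1)
        then show "\<bar>measure mu J - rho (Suc (k+i)) J * measure nu J\<bar> \<le> measure mu J + rho (Suc (k+i)) J * measure nu J"
          by (simp add: abs_le_iff)
      qed
      also have "\<dots> = measure mu P + rho (k+i) P * measure nu P"
        using additive_sum[OF measure_additive[OF rmu] PD, of 1] rho_additive[OF PQ]
        by (simp add: sum.distrib)
      finally show ?thesis using False by simp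
    qed
  qed
  also have "\<dots> = measure mu I + rho k I * measure nu I - 2 * X I k i"
    unfolding X_def using additive_sum[OF measure_additive[OF rmu] ID, of i] rho_sum[OF I, of i]
    by (simp add: sum.distrib sum_subtractf sum_distrib_left[symmetric])
  also have "\<dots> = 2 * (measure mu I - X I k i)" using p(3) by simp
  finally show ?thesis .
qed

lemma X_le: assumes T: "inT k I" shows "X I k i \<le> measure mu I" "0 \<le> X I k i"
proof -
  have ID: "I \<in> D k" using desc_sub[OF inT_desc[OF T]] by simp
  have "X I k i \<le> (\<Sum>P\<in>desc k I i. measure mu P)" unfolding X_def by (intro sum_mono) auto
  also have "\<dots> = measure mu I" by (rule additive_sum[OF measure_additive[OF rmu] ID])
  finally show "X I k i \<le> measure mu I" .
  show "0 \<le> X I k i" unfolding X_def by (intro sum_nonneg) auto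
qed

lemma err_nonneg: "0 \<le> err I k n" unfolding err_def by (intro sum_nonneg) auto
lemma bt_nonneg: "0 \<le> bt I k n" unfolding bt_def by (intro sum_nonneg) auto

end


lemma sq3: "(a + b + c)^2 \<le> 3 * a^2 + 3 * b^2 + 3 * (c::real)^2"
proof -
  have "0 \<le> (a - b)^2 + (b - c)^2 + (a - c)^2" by simp
  then show ?thesis by (simp add: power2_eq_square algebra_simps)
qed

lemma c2l: "(2 * (1/2::real)^N)^2 = 4 * (1/4)^N"
proof -
  have "((1/2::real)^N)^2 = ((1/2)^2)^N" by (simp add: power_mult[symmetric] mult.commute)
  also have "(1/2::real)^2 = 1/4" by (simp add: power2_eq_square)
  finally show ?thesis by (simp add: power_mult_distrib)
qed

context mainloc begin

lemma alpha_sq: assumes T: "inT k I"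
  shows "measure mu I * (alpha mu nu I)^2 \<le> (6/dl) * (\<Sum>i<N. (1/2)^i * V I k (Suc i))
      + 24 * (\<Sum>i<N. (1/2)^i * (measure mu I - X I k i)) + 12 * (1/4)^N * measure mu I"
proof -
  note p = inT_pos[OF T]
  have ID: "I \<in> D k" using desc_sub[OF inT_desc[OF T]] by simp
  define m where "m = measure mu I"
  have m: "0 < m" using p unfolding m_def by simp
  define A where "A = (\<Sum>i<N. (1/2::real)^i * bt I k (Suc i))"
  define B where "B = (\<Sum>i<N. (1/2::real)^i * (err I k (Suc i) / m))"
  define c where "c = 2 * (1/2::real)^N"
  have A0: "0 \<le> A" unfolding A_def using bt_nonneg by (intro sum_nonneg) auto
  have B0: "0 \<le> B" unfolding B_def using err_nonneg m by (intro sum_nonneg) auto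
  have c0: "0 \<le> c" unfolding c_def by simp
  have a0: "0 \<le> alpha mu nu I" by (rule alpha_bound(2)[OF rmu rnu ID p(2) p(1)])
  have "alpha mu nu I \<le> (\<Sum>i<N. (1/2)^i * bcoef mu nu I k (Suc i)) + c"
    unfolding c_def by (rule alpha_bound(1)[OF rmu rnu ID p(2) p(1)])
  also have "(\<Sum>i<N. (1/2)^i * bcoef mu nu I k (Suc i)) \<le> A + B"
  proof -
    have "(\<Sum>i<N. (1/2::real)^i * bcoef mu nu I k (Suc i)) \<le> (\<Sum>i<N. (1/2)^i * (bt I k (Suc i) + err I k (Suc i) / m))"
      using bcoef_split[OF T] unfolding m_def by (intro sum_mono mult_left_mono) auto
    also have "\<dots> = A + B" unfolding A_def B_def by (simp add: sum.distrib distrib_left)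
    finally show ?thesis .
  qed
  finally have al: "alpha mu nu I \<le> A + B + c" by simp
  have "(alpha mu nu I)^2 \<le> (A + B + c)^2" using al a0 by (intro power_mono) auto
  also have "\<dots> \<le> 3 * A^2 + 3 * B^2 + 3 * c^2" by (rule sq3)
  finally have al2: "(alpha mu nu I)^2 \<le> 3 * A^2 + 3 * B^2 + 3 * c^2" .
  have "A^2 \<le> (\<Sum>i<N. (1/2::real)^i) * (\<Sum>i<N. (1/2)^i * (bt I k (Suc i))^2)"
    unfolding A_def by (rule weighted_CS) simp
  also have "\<dots> \<le> 2 * (\<Sum>i<N. (1/2)^i * (bt I k (Suc i))^2)"
    using geom_sum_le[of N] by (intro mult_right_mono sum_nonneg) auto
  finally have A2: "A^2 \<le> 2 * (\<Sum>i<N. (1/2)^i * (bt I k (Suc i))^2)" .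
  have eb: "\<And>i. err I k (Suc i) \<le> 2 * m"
  proof -
    fix i
    have a: "err I k (Suc i) \<le> 2 * (measure mu I - X I k i)" by (rule err_bound[OF T])
    have b: "0 \<le> X I k i" by (rule X_le(2)[OF T])
    show "err I k (Suc i) \<le> 2 * m" using a b unfolding m_def by (simp add: algebra_simps)
  qed
  have "B \<le> (\<Sum>i<N. (1/2::real)^i * 2)"
    unfolding B_def using eb m by (intro sum_mono mult_left_mono) (auto simp: field_simps)
  also have "\<dots> \<le> 4" using geom_sum_le[of N] by (simp add: sum_distrib_right[symmetric])
  finally have B4: "B \<le> 4" .
  have B2: "B^2 \<le> 4 * B" using B4 B0 by (simp add: power2_eq_square mult_right_mono)
  have c2: "c^2 = 4 * (1/4)^N" unfolding c_def by (rule c2l)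
  have "m * (alpha mu nu I)^2 \<le> m * (3 * A^2 + 3 * B^2 + 3 * c^2)"
    using al2 m by (intro mult_left_mono) auto
  also have "\<dots> \<le> 6 * (\<Sum>i<N. (1/2)^i * (m * (bt I k (Suc i))^2)) + 12 * (m * B) + 12 * (1/4)^N * m"
  proof -
    have "m * A^2 \<le> 2 * (\<Sum>i<N. (1/2)^i * (m * (bt I k (Suc i))^2))"
    proof -
      have "m * A^2 \<le> m * (2 * (\<Sum>i<N. (1/2)^i * (bt I k (Suc i))^2))" using A2 m by (intro mult_left_mono) auto
      also have "\<dots> = 2 * (\<Sum>i<N. (1/2)^i * (m * (bt I k (Suc i))^2))"
        by (simp add: sum_distrib_left algebra_simps)
      finally show ?thesis .
    qed
    moreover have "m * B^2 \<le> m * (4 * B)" using B2 m by (intro mult_left_mono) auto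
    moreover have "m * (3 * A^2 + 3 * B^2 + 3 * c^2) = 3 * (m * A^2) + 3 * (m * B^2) + 3 * (m * c^2)"
      by (simp add: algebra_simps)
    moreover have "m * c^2 = 4 * (1/4)^N * m" unfolding c2 by simp
    moreover have "m * (4 * B) = 4 * (m * B)" by simp
    ultimately show ?thesis by linarith
  qed
  also have "\<dots> \<le> (6/dl) * (\<Sum>i<N. (1/2)^i * V I k (Suc i))
      + 24 * (\<Sum>i<N. (1/2)^i * (measure mu I - X I k i)) + 12 * (1/4)^N * m"
  proof -
    have "(\<Sum>i<N. (1/2::real)^i * (m * (bt I k (Suc i))^2)) \<le> (\<Sum>i<N. (1/2)^i * (V I k (Suc i) / dl))"
      using bt_bound[OF T] unfolding m_def by (intro sum_mono mult_left_mono) auto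
    also have "\<dots> = (1/dl) * (\<Sum>i<N. (1/2)^i * V I k (Suc i))" by (simp add: sum_distrib_left)
    finally have h1: "(\<Sum>i<N. (1/2::real)^i * (m * (bt I k (Suc i))^2)) \<le> (1/dl) * (\<Sum>i<N. (1/2)^i * V I k (Suc i))" .
    have "m * B = (\<Sum>i<N. (1/2)^i * err I k (Suc i))" unfolding B_def using m
      by (simp add: sum_distrib_left)
    also have "\<dots> \<le> (\<Sum>i<N. (1/2)^i * (2 * (measure mu I - X I k i)))"
      using err_bound[OF T] by (intro sum_mono mult_left_mono) auto
    also have "\<dots> = 2 * (\<Sum>i<N. (1/2)^i * (measure mu I - X I k i))" by (simp add: sum_distrib_left algebra_simps)
    finally have h2: "m * B \<le> 2 * (\<Sum>i<N. (1/2)^i * (measure mu I - X I k i))" .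
    have "(6/dl) * (\<Sum>i<N. (1/2)^i * V I k (Suc i)) = 6 * ((1/dl) * (\<Sum>i<N. (1/2)^i * V I k (Suc i)))" by simp
    then show ?thesis using h1 h2 by linarith
  qed
  finally show ?thesis unfolding m_def .
qed

end


context mainloc begin

definition TS :: "nat \<Rightarrow> real set set" where "TS k = {I \<in> desc 0 Q k. inT k I}"

lemma finite_TS: "finite (TS k)" unfolding TS_def using finite_desc[OF Q] by simp

lemma TS_sum: "(\<Sum>I\<in>TS k. f I) = (\<Sum>I\<in>desc 0 Q k. if inT k I then f I else 0)"
  unfolding TS_def by (rule sum.inter_filter[OF finite_desc[OF Q]])

lemma level_sum:
  "(\<Sum>I\<in>TS k. measure mu I * (alpha mu nu I)^2)
     \<le> (6/dl) * (\<Sum>i<N. (1/2)^i * (H (k + Suc i) - H k))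
       + 24 * (\<Sum>i<N. (1/2)^i * (Z k - Z (k+i))) + 12 * (1/4)^N * Z k"
proof -
  define a where "a I = (\<Sum>i<N. (1/2::real)^i * V I k (Suc i))" for I
  define b where "b I = (\<Sum>i<N. (1/2::real)^i * (measure mu I - X I k i))" for I
  have S1: "(\<Sum>I\<in>TS k. measure mu I * (alpha mu nu I)^2)
      \<le> (\<Sum>I\<in>TS k. (6/dl) * a I + 24 * b I + 12 * (1/4)^N * measure mu I)"
    unfolding a_def b_def by (rule sum_mono) (rule alpha_sq, simp add: TS_def)
  also have "\<dots> = (\<Sum>I\<in>TS k. (6/dl) * a I) + (\<Sum>I\<in>TS k. 24 * b I) + (\<Sum>I\<in>TS k. 12 * (1/4)^N * measure mu I)"
    by (simp add: sum.distrib)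
  also have "\<dots> = (6/dl) * (\<Sum>I\<in>TS k. a I) + 24 * (\<Sum>I\<in>TS k. b I) + 12 * (1/4)^N * (\<Sum>I\<in>TS k. measure mu I)"
    by (simp only: sum_distrib_left[symmetric])
  also have "(\<Sum>I\<in>TS k. measure mu I) = Z k" by (simp add: TS_sum Z_k)
  finally have S1: "(\<Sum>I\<in>TS k. measure mu I * (alpha mu nu I)^2)
      \<le> (6/dl) * (\<Sum>I\<in>TS k. a I) + 24 * (\<Sum>I\<in>TS k. b I) + 12 * (1/4)^N * Z k" .
  have "(\<Sum>I\<in>TS k. a I) \<le> (\<Sum>I\<in>desc 0 Q k. a I)"
    unfolding TS_def a_def using V_nonneg finite_desc[OF Q]
    by (intro sum_mono2) (auto intro!: sum_nonneg)
  also have "(\<Sum>I\<in>desc 0 Q k. a I) = (\<Sum>i<N. (1/2)^i * (H (k + Suc i) - H k))"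
  proof -
    have "(\<Sum>I\<in>desc 0 Q k. a I) = (\<Sum>i<N. \<Sum>I\<in>desc 0 Q k. (1/2::real)^i * V I k (Suc i))"
      unfolding a_def by (rule sum.swap)
    also have "\<dots> = (\<Sum>i<N. (1/2::real)^i * (\<Sum>I\<in>desc 0 Q k. V I k (Suc i)))"
      by (simp add: sum_distrib_left)
    also have "\<dots> = (\<Sum>i<N. (1/2)^i * (H (k + Suc i) - H k))"
      by (simp only: H_split)
    finally show ?thesis .
  qed
  finally have S2: "(\<Sum>I\<in>TS k. a I) \<le> (\<Sum>i<N. (1/2)^i * (H (k + Suc i) - H k))" .
  have S3: "(\<Sum>I\<in>TS k. b I) = (\<Sum>i<N. (1/2)^i * (Z k - Z (k+i)))"
  proof -
    have "(\<Sum>I\<in>TS k. b I) = (\<Sum>i<N. \<Sum>I\<in>TS k. (1/2::real)^i * (measure mu I - X I k i))"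
      unfolding b_def by (rule sum.swap)
    also have "\<dots> = (\<Sum>i<N. (1/2::real)^i * (\<Sum>I\<in>TS k. measure mu I - X I k i))"
      by (simp add: sum_distrib_left)
    also have "\<dots> = (\<Sum>i<N. (1/2)^i * (Z k - Z (k+i)))"
    proof (rule sum.cong[OF refl])
      fix i
      have "(\<Sum>I\<in>TS k. measure mu I - X I k i) = (\<Sum>I\<in>TS k. measure mu I) - (\<Sum>I\<in>TS k. X I k i)"
        by (rule sum_subtractf)
      also have "\<dots> = Z k - Z (k+i)" by (simp only: TS_sum Z_k Z_split)
      finally show "(1/2::real)^i * (\<Sum>I\<in>TS k. measure mu I - X I k i) = (1/2)^i * (Z k - Z (k+i))" by simp
    qed
    finally show ?thesis .
  qed
  have "(6/dl) * (\<Sum>I\<in>TS k. a I) \<le> (6/dl) * (\<Sum>i<N. (1/2)^i * (H (k + Suc i) - H k))"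
    using S2 dl by (intro mult_left_mono) auto
  then show ?thesis using S1 S3 by linarith
qed

definition Kc :: real where "Kc = (24/dl) * R^2 * measure nu Q + 60 * measure mu Q"

lemma total_sum: "(\<Sum>k<N. \<Sum>I\<in>TS k. measure mu I * (alpha mu nu I)^2) \<le> Kc"
proof -
  let ?B = "R^2 * measure nu Q"
  define SH where "SH = (\<Sum>i<N. (1/2::real)^i * (\<Sum>k<N. H (k + Suc i) - H k))"
  define SZ where "SZ = (\<Sum>i<N. (1/2::real)^i * (\<Sum>k<N. (- Z (k+i)) - (- Z k)))"
  define SZk where "SZk = (\<Sum>k<N. Z k)"
  have "(\<Sum>k<N. \<Sum>I\<in>TS k. measure mu I * (alpha mu nu I)^2)
     \<le> (\<Sum>k<N. (6/dl) * (\<Sum>i<N. (1/2)^i * (H (k + Suc i) - H k))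
       + 24 * (\<Sum>i<N. (1/2)^i * (Z k - Z (k+i))) + 12 * (1/4)^N * Z k)"
    by (rule sum_mono) (rule level_sum)
  also have "\<dots> = (6/dl) * SH + 24 * SZ + 12 * (1/4)^N * SZk"
  proof -
    have e1: "(\<Sum>k<N. (\<Sum>i<N. (1/2::real)^i * (H (k + Suc i) - H k))) = SH"
      unfolding SH_def by (subst sum.swap) (simp add: sum_distrib_left)
    have e2: "(\<Sum>k<N. (\<Sum>i<N. (1/2::real)^i * (Z k - Z (k+i)))) = SZ"
      unfolding SZ_def by (subst sum.swap) (simp add: sum_distrib_left)
    show ?thesis unfolding SZk_def
      by (simp only: sum.distrib sum_distrib_left[symmetric] e1 e2)
  qed
  finally have E: "(\<Sum>k<N. \<Sum>I\<in>TS k. measure mu I * (alpha mu nu I)^2) \<le> (6/dl) * SH + 24 * SZ + 12 * (1/4)^N * SZk" .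
  have "SH \<le> (\<Sum>i<N. (1/2)^i * (real (Suc i) * ?B))"
    unfolding SH_def
  proof (rule sum_mono)
    fix i
    have "(\<Sum>k<N. H (k + Suc i) - H k) \<le> real (Suc i) * (?B - 0)"
      by (rule telescope_bound) (use H_bounds in auto)
    then show "(1/2::real)^i * (\<Sum>k<N. H (k + Suc i) - H k) \<le> (1/2)^i * (real (Suc i) * ?B)"
      by (intro mult_left_mono) auto
  qed
  also have "(\<Sum>i<N. (1/2::real)^i * (real (Suc i) * ?B)) = ((\<Sum>i<N. (1/2::real)^i * real i) + (\<Sum>i<N. (1/2::real)^i)) * ?B"
  proof -
    have "(\<Sum>i<N. (1/2::real)^i * (real (Suc i) * ?B)) = (\<Sum>i<N. ((1/2::real)^i * real i + (1/2)^i) * ?B)"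
      by (intro sum.cong refl) (simp add: algebra_simps)
    also have "\<dots> = (\<Sum>i<N. (1/2::real)^i * real i + (1/2)^i) * ?B" by (rule sum_distrib_right[symmetric])
    also have "\<dots> = ((\<Sum>i<N. (1/2::real)^i * real i) + (\<Sum>i<N. (1/2::real)^i)) * ?B" by (simp only: sum.distrib)
    finally show ?thesis .
  qed
  also have "\<dots> \<le> 4 * ?B"
    using geom_sum_i_le[of N] geom_sum_le[of N] by (intro mult_right_mono) auto
  finally have SHb: "SH \<le> 4 * ?B" .
  have "SZ \<le> (\<Sum>i<N. (1/2)^i * (real i * measure mu Q))"
    unfolding SZ_def
  proof (rule sum_mono)
    fix i
    have "(\<Sum>k<N. (- Z (k+i)) - (- Z k)) \<le> real i * (0 - (- measure mu Q))"
      by (rule telescope_bound) (use Z_bounds in auto)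
    then show "(1/2::real)^i * (\<Sum>k<N. (- Z (k+i)) - (- Z k)) \<le> (1/2)^i * (real i * measure mu Q)"
      by (intro mult_left_mono) auto
  qed
  also have "(\<Sum>i<N. (1/2::real)^i * (real i * measure mu Q)) = (\<Sum>i<N. (1/2::real)^i * real i) * measure mu Q"
    by (simp only: sum_distrib_right mult.assoc)
  also have "\<dots> \<le> 2 * measure mu Q"
    using geom_sum_i_le[of N] by (intro mult_right_mono) auto
  finally have SZb: "SZ \<le> 2 * measure mu Q" .
  have SZkb: "SZk \<le> real N * measure mu Q"
    unfolding SZk_def using sum_mono[of "{..<N}" Z "\<lambda>_. measure mu Q"] Z_bounds by simp
  have q: "(1/4::real)^N * real N \<le> 1"
  proof -
    have "(1/4::real)^N \<le> (1/2)^N" by (intro power_mono) auto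
    then have "(1/4::real)^N * real N \<le> (1/2)^N * real N" by (intro mult_right_mono) auto
    also have "\<dots> \<le> 1" using N_half_le[of N] by (simp add: mult.commute)
    finally show ?thesis .
  qed
  have m0: "0 \<le> measure mu Q" by simp
  have t1: "(6/dl) * SH \<le> (6/dl) * (4 * ?B)" using SHb dl by (intro mult_left_mono) auto
  have t3: "12 * (1/4::real)^N * SZk \<le> 12 * measure mu Q"
  proof -
    have "12 * (1/4::real)^N * SZk \<le> 12 * (1/4::real)^N * (real N * measure mu Q)"
      using SZkb by (intro mult_left_mono) auto
    also have "\<dots> = 12 * (((1/4::real)^N * real N) * measure mu Q)" by simp
    also have "\<dots> \<le> 12 * (1 * measure mu Q)" using q m0 by (intro mult_left_mono mult_right_mono) auto
    finally show ?thesis by simp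
  qed
  have "(6/dl) * (4 * ?B) = (24/dl) * R^2 * measure nu Q" by simp
  then show ?thesis unfolding Kc_def using E t1 SZb t3 by linarith
qed

end


context mainloc begin

definition fk :: "nat \<Rightarrow> real \<Rightarrow> ennreal" where
  "fk k x = (\<Sum>I\<in>TS k. ennreal ((alpha mu nu I)^2) * indicator I x)"

definition hh :: "real \<Rightarrow> ennreal" where "hh x = (\<Sum>k. fk k x)"

definition G :: "real set" where
  "G = {x \<in> Q. \<forall>k I. I \<in> D k \<longrightarrow> x \<in> I \<longrightarrow> good I}"

lemma G_inT: "x \<in> G \<Longrightarrow> I \<in> D k \<Longrightarrow> x \<in> I \<Longrightarrow> inT k I"
proof (induction k arbitrary: I)
  case 0
  have xQ: "x \<in> Q" using 0 unfolding G_def by simp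
  have "I = Q" by (rule uniq[OF 0(2) Q 0(3) xQ])
  then show ?case using good_Q by simp
next
  case (Suc k)
  let ?P = "par k I"
  have p: "?P \<in> D k" "I \<subseteq> ?P" using par_prop[OF Suc.prems(2)] by auto
  have xP: "x \<in> ?P" using p(2) Suc.prems(3) by blast
  have tP: "inT k ?P" by (rule Suc.IH[OF Suc.prems(1) p(1) xP])
  have "?P \<subseteq> Q" using desc_sub[OF inT_desc[OF tP]] by simp
  then have "I \<in> desc 0 Q (Suc k)" using p(2) Suc.prems(2) unfolding desc_def by auto
  moreover have "good I" using Suc.prems unfolding G_def by blast
  ultimately show ?case using tP by simp
qed

lemma TS_disj: "k \<noteq> k' \<Longrightarrow> TS k \<inter> TS k' = {}"
  unfolding TS_def desc_def using levels_disj by auto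

lemma fk_eq: "(\<Sum>I\<in>TS k. ennreal ((alpha mu nu I)^2 * indicator I x)) = fk k x"
  unfolding fk_def by (intro sum.cong refl) (simp add: ennreal_mult' ennreal_indicator)

lemma S_le_hh: assumes x: "x \<in> G" shows "square_function D mu nu x \<le> hh x"
  unfolding square_function_def
proof (rule infsum_le_finite_sums)
  show "(\<lambda>I. ennreal ((alpha mu nu I)^2 * indicator I x)) summable_on (\<Union>k. D k)"
    by (rule nonneg_summable_on_complete) simp
  fix F assume F: "finite F" "F \<subseteq> (\<Union>k. D k)"
  let ?f = "\<lambda>I. ennreal ((alpha mu nu I)^2 * indicator I x)"
  have "\<forall>I\<in>F. \<exists>k. I \<in> D k" using F(2) by blast
  then obtain lv where lv0: "\<forall>I\<in>F. I \<in> D (lv I)" by (rule bchoice[THEN exE])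
  have lv: "\<And>I. I \<in> F \<Longrightarrow> I \<in> D (lv I)" using lv0 by blast
  define K where "K = Suc (Max (lv ` F))"
  have lvK: "\<And>I. I \<in> F \<Longrightarrow> lv I < K"
  proof -
    fix I assume "I \<in> F"
    then have "lv I \<le> Max (lv ` F)" using F(1) by (intro Max_ge) auto
    then show "lv I < K" unfolding K_def by simp
  qed
  define U where "U = (\<Union>k<K. TS k)"
  have finU: "finite U" unfolding U_def using finite_TS by simp
  have z: "\<And>I. I \<in> F - U \<Longrightarrow> ?f I = 0"
  proof -
    fix I assume I: "I \<in> F - U"
    show "?f I = 0"
    proof (cases "x \<in> I")
      case False then show ?thesis by simp
    next
      case True
      have IF: "I \<in> F" using I by blast
      have t: "inT (lv I) I" by (rule G_inT[OF x lv[OF IF] True])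
      have "I \<in> TS (lv I)" unfolding TS_def using inT_desc[OF t] t by blast
      moreover have "lv I \<in> {..<K}" using lvK[OF IF] by simp
      ultimately have IU: "I \<in> U" unfolding U_def by blast
      have "I \<notin> U" using I by blast
      then show ?thesis using IU by contradiction
    qed
  qed
  have "sum ?f F = sum ?f (F \<inter> U) + sum ?f (F - U)"
    by (rule sum.Int_Diff[OF F(1)])
  also have "sum ?f (F - U) = 0" by (rule sum.neutral) (use z in blast)
  also have "sum ?f (F \<inter> U) \<le> sum ?f U" using finU by (intro sum_mono2) auto
  also have "sum ?f U = (\<Sum>k<K. sum ?f (TS k))"
    unfolding U_def by (rule sum.UNION_disjoint) (auto simp: finite_TS TS_disj)
  also have "\<dots> = (\<Sum>k<K. fk k x)" by (simp add: fk_eq)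
  also have "\<dots> \<le> hh x" unfolding hh_def by (rule sum_le_suminf) simp_all
  finally show "sum ?f F \<le> hh x" by simp
qed

lemma sets_mu: "sets mu = sets borel" by (rule sets_radon[OF rmu])

lemma TS_cell: "I \<in> TS k \<Longrightarrow> I \<in> D k"
  unfolding TS_def using desc_sub[of I 0 Q k] by auto

lemma fk_meas: "fk k \<in> borel_measurable mu"
proof -
  have bM: "borel_measurable mu = borel_measurable (borel::real measure)"
    by (rule measurable_cong_sets[OF sets_mu refl])
  show ?thesis unfolding bM fk_def
    using TS_cell cell_borel by (intro borel_measurable_sum borel_measurable_times_ennreal) auto
qed

lemma int_fk: "integral\<^sup>N mu (fk k) = ennreal (\<Sum>I\<in>TS k. measure mu I * (alpha mu nu I)^2)"
proof -
  have "integral\<^sup>N mu (fk k) = (\<Sum>I\<in>TS k. \<integral>\<^sup>+x. ennreal ((alpha mu nu I)^2) * indicator I x \<partial>mu)"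
    unfolding fk_def
  proof (rule nn_integral_sum)
    fix I assume "I \<in> TS k"
    then have "I \<in> sets mu" using TS_cell cell_borel sets_mu by auto
    then show "(\<lambda>x. ennreal ((alpha mu nu I)^2) * indicator I x) \<in> borel_measurable mu" by simp
  qed
  also have "\<dots> = (\<Sum>I\<in>TS k. ennreal ((alpha mu nu I)^2) * emeasure mu I)"
  proof (rule sum.cong[OF refl])
    fix I assume "I \<in> TS k"
    then have "I \<in> sets mu" using TS_cell cell_borel sets_mu by auto
    then show "(\<integral>\<^sup>+x. ennreal ((alpha mu nu I)^2) * indicator I x \<partial>mu) = ennreal ((alpha mu nu I)^2) * emeasure mu I"
      by (rule nn_integral_cmult_indicator)
  qed
  also have "\<dots> = (\<Sum>I\<in>TS k. ennreal (measure mu I * (alpha mu nu I)^2))"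
  proof (rule sum.cong[OF refl])
    fix I assume "I \<in> TS k"
    then have fin: "emeasure mu I < \<infinity>" using TS_cell cell_fin[OF rmu] by auto
    have "emeasure mu I = ennreal (measure mu I)"
      by (rule emeasure_eq_ennreal_measure) (use fin in simp)
    then show "ennreal ((alpha mu nu I)^2) * emeasure mu I = ennreal (measure mu I * (alpha mu nu I)^2)"
      by (simp add: ennreal_mult'' mult.commute)
  qed
  also have "\<dots> = ennreal (\<Sum>I\<in>TS k. measure mu I * (alpha mu nu I)^2)"
    by (rule sum_ennreal) simp
  finally show ?thesis .
qed

lemma int_hh: "integral\<^sup>N mu hh \<le> ennreal Kc"
proof -
  have "integral\<^sup>N mu hh = (\<Sum>k. integral\<^sup>N mu (fk k))"
    unfolding hh_def by (rule nn_integral_suminf[OF fk_meas])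
  also have "\<dots> \<le> ennreal Kc"
  proof (rule suminf_le_const)
    show "summable (\<lambda>k. integral\<^sup>N mu (fk k))" by simp
    fix N
    have "(\<Sum>k<N. integral\<^sup>N mu (fk k)) = ennreal (\<Sum>k<N. \<Sum>I\<in>TS k. measure mu I * (alpha mu nu I)^2)"
      by (simp add: int_fk sum_nonneg)
    also have "\<dots> \<le> ennreal Kc" using total_sum[of N] by (rule ennreal_leI)
    finally show "(\<Sum>k<N. integral\<^sup>N mu (fk k)) \<le> ennreal Kc" .
  qed
  finally show ?thesis .
qed

lemma hh_meas: "hh \<in> borel_measurable mu"
  unfolding hh_def using fk_meas by (rule borel_measurable_suminf_order)

theorem main_local: "AE x in mu. x \<in> G \<longrightarrow> square_function D mu nu x < \<infinity>"
proof -
  have "integral\<^sup>N mu hh < top" using int_hh ennreal_less_top[of Kc] by (rule le_less_trans)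
  then have "integral\<^sup>N mu hh \<noteq> \<infinity>" by simp
  then have ae: "AE x in mu. hh x \<noteq> \<infinity>" by (rule nn_integral_PInf_AE[OF hh_meas])
  have imp: "\<And>x. hh x \<noteq> \<infinity> \<Longrightarrow> x \<in> G \<longrightarrow> square_function D mu nu x < \<infinity>"
  proof
    fix x assume h: "hh x \<noteq> \<infinity>" and "x \<in> G"
    then have "square_function D mu nu x \<le> hh x" by (intro S_le_hh)
    also have "\<dots> < \<infinity>" using h by (simp add: top.not_eq_extremum)
    finally show "square_function D mu nu x < \<infinity>" .
  qed
  show ?thesis
    apply (rule AE_mp[OF ae])
    apply (rule AE_I2)
    using imp by blast
qed

end


context dyad begin

lemma cell_le_level: assumes I: "I \<in> D k" and J: "J \<in> D j" and sub: "I \<subseteq> J" shows "j \<le> k"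
proof (rule ccontr)
  assume "\<not> j \<le> k"
  then have jk: "k < j" by simp
  have lt: "(1/2::real)^j < (1/2)^k" using jk by (intro power_strict_decreasing) auto
  have eI: "I = {Inf I..<Inf I + (1/2)^k}" by (rule cell_Inf[OF I])
  have eJ: "J = {Inf J..<Inf J + (1/2)^j}" by (rule cell_Inf[OF J])
  have aI: "Inf I \<in> I" by (rule Inf_in[OF I])
  then have "Inf I \<in> J" using sub by blast
  then have b: "Inf J \<le> Inf I" "Inf I < Inf J + (1/2)^j" using eJ by (metis atLeastLessThan_iff)+
  let ?y = "Inf J + (1/2)^j"
  have "?y \<in> {Inf I..<Inf I + (1/2)^k}" using b lt by (simp only: atLeastLessThan_iff) linarith
  then have "?y \<in> I" using eI by simp
  then have "?y \<in> J" using sub by blast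
  then have "?y \<in> {Inf J..<Inf J + (1/2)^j}" using eJ by simp
  then show False by simp
qed

lemma countable_desc_union: "Q \<in> D 0 \<Longrightarrow> countable (\<Union>k. desc 0 Q k)"
  using finite_desc by (intro countable_UN) (auto intro: countable_finite)

lemma covering:
  assumes m1: "radon_measure m1" and m2: "radon_measure m2" and Q: "Q \<in> D 0"
    and F: "F \<subseteq> (\<Union>k. desc 0 Q k)" and c: "0 \<le> c"
    and le: "\<And>I. I \<in> F \<Longrightarrow> measure m1 I \<le> c * measure m2 I"
  shows "\<Union>F \<in> sets borel" "emeasure m1 (\<Union>F) \<le> ennreal c * emeasure m2 Q"
proof -
  have cF: "countable F" using countable_desc_union[OF Q] F by (rule countable_subset[rotated])
  have Fcell: "\<And>I. I \<in> F \<Longrightarrow> \<exists>k. I \<in> desc 0 Q k" using F by blast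
  have Fb: "\<And>I. I \<in> F \<Longrightarrow> I \<in> sets borel"
    using Fcell desc_sub cell_borel by (metis add_0)
  show "\<Union>F \<in> sets borel" using cF Fb by (intro sets.countable_Union) auto
  define F' where "F' = {I\<in>F. \<forall>J\<in>F. I \<subseteq> J \<longrightarrow> J = I}"
  have max: "\<And>I. I \<in> F \<Longrightarrow> \<exists>P\<in>F'. I \<subseteq> P"
  proof -
    fix I assume IF: "I \<in> F"
    then obtain k where Ik: "I \<in> desc 0 Q k" using Fcell by blast
    have ID: "I \<in> D k" using desc_sub[OF Ik] by simp
    define S where "S = {j. j \<le> k \<and> par j I \<in> F}"
    have "par k I = I" by (rule par_eq[OF ID ID]) simp
    then have kS: "k \<in> S" unfolding S_def using IF by simp
    define j0 where "j0 = (LEAST j. j \<in> S)"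
    have j0S: "j0 \<in> S" unfolding j0_def using kS by (rule LeastI)
    have j0min: "\<And>j. j \<in> S \<Longrightarrow> j0 \<le> j" unfolding j0_def by (rule Least_le)
    let ?P = "par j0 I"
    have Pp: "?P \<in> D j0" "I \<subseteq> ?P" using par_prop[OF ID] j0S unfolding S_def by auto
    have PF: "?P \<in> F" using j0S unfolding S_def by simp
    have "?P \<in> F'" unfolding F'_def
    proof (intro CollectI conjI ballI impI PF)
      fix J assume JF: "J \<in> F" and PJ: "?P \<subseteq> J"
      obtain j' where Jj: "J \<in> desc 0 Q j'" using Fcell[OF JF] by blast
      have JD: "J \<in> D j'" using desc_sub[OF Jj] by simp
      have IJ: "I \<subseteq> J" using Pp(2) PJ by blast
      have jk: "j' \<le> k" by (rule cell_le_level[OF ID JD IJ])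
      have Jpar: "par j' I = J" by (rule par_eq[OF ID JD IJ])
      have "j' \<in> S" unfolding S_def using jk Jpar JF by simp
      then have "j0 \<le> j'" by (rule j0min)
      moreover have "j' \<le> j0" by (rule cell_le_level[OF Pp(1) JD PJ])
      ultimately have "j' = j0" by simp
      then show "J = ?P" using Jpar by simp
    qed
    then show "\<exists>P\<in>F'. I \<subseteq> P" using Pp(2) by blast
  qed
  have U: "\<Union>F = \<Union>F'"
  proof
    show "\<Union>F \<subseteq> \<Union>F'" using max by blast
    show "\<Union>F' \<subseteq> \<Union>F" unfolding F'_def by blast
  qed
  have disj: "disjoint_family_on (\<lambda>I. I) F'"
    unfolding disjoint_family_on_def
  proof (intro ballI impI)
    fix I J assume IF': "I \<in> F'" and JF': "J \<in> F'" and ne: "I \<noteq> J"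
    have IF: "I \<in> F" and JF: "J \<in> F" using IF' JF' unfolding F'_def by auto
    obtain k where "I \<in> desc 0 Q k" using Fcell[OF IF] by blast
    then have ID: "I \<in> D k" using desc_sub by fastforce
    obtain j where "J \<in> desc 0 Q j" using Fcell[OF JF] by blast
    then have JD: "J \<in> D j" using desc_sub by fastforce
    show "I \<inter> J = {}"
    proof (rule ccontr)
      assume "I \<inter> J \<noteq> {}"
      then obtain x where x: "x \<in> I" "x \<in> J" by blast
      show False
      proof (cases "k \<le> j")
        case True
        have p: "par k J \<in> D k" "J \<subseteq> par k J" using par_prop[OF JD True] by auto
        have "par k J = I" using uniq[OF p(1) ID _ x(1)] p(2) x(2) by blast
        then have "J \<subseteq> I" using p(2) by simp
        then have "I = J" using JF' IF unfolding F'_def by blast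
        then show False using ne by simp
      next
        case False
        then have kj: "j \<le> k" by simp
        have p: "par j I \<in> D j" "I \<subseteq> par j I" using par_prop[OF ID kj] by auto
        have "par j I = J" using uniq[OF p(1) JD _ x(2)] p(2) x(1) by blast
        then have "I \<subseteq> J" using p(2) by simp
        then have "J = I" using IF' JF unfolding F'_def by blast
        then show False using ne by simp
      qed
    qed
  qed
  have cF': "countable F'" using cF unfolding F'_def by (rule countable_subset[rotated]) auto
  have s1: "sets m1 = sets borel" by (rule sets_radon[OF m1])
  have s2: "sets m2 = sets borel" by (rule sets_radon[OF m2])
  have F'F: "F' \<subseteq> F" unfolding F'_def by auto
  have "emeasure m1 (\<Union>F) = emeasure m1 (\<Union>((\<lambda>I. I) ` F'))" using U by simp
  also have "\<dots> = (\<integral>\<^sup>+I. emeasure m1 I \<partial>count_space F')"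
    by (rule emeasure_UN_countable[OF _ cF' disj]) (use Fb F'F s1 in auto)
  also have "\<dots> \<le> (\<integral>\<^sup>+I. ennreal c * emeasure m2 I \<partial>count_space F')"
  proof (rule nn_integral_mono)
    fix I assume "I \<in> space (count_space F')"
    then have IF: "I \<in> F" using F'F by auto
    obtain k where "I \<in> desc 0 Q k" using Fcell[OF IF] by blast
    then have ID: "I \<in> D k" using desc_sub by fastforce
    have e1: "emeasure m1 I = ennreal (measure m1 I)"
      by (rule emeasure_eq_ennreal_measure) (use cell_fin[OF m1 ID] in simp)
    have e2: "emeasure m2 I = ennreal (measure m2 I)"
      by (rule emeasure_eq_ennreal_measure) (use cell_fin[OF m2 ID] in simp)
    have "ennreal (measure m1 I) \<le> ennreal (c * measure m2 I)" using le[OF IF] by (rule ennreal_leI)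
    also have "\<dots> = ennreal c * ennreal (measure m2 I)" using c by (simp add: ennreal_mult)
    finally show "emeasure m1 I \<le> ennreal c * emeasure m2 I" unfolding e1 e2 .
  qed
  also have "\<dots> = ennreal c * (\<integral>\<^sup>+I. emeasure m2 I \<partial>count_space F')"
    by (rule nn_integral_cmult) simp
  also have "(\<integral>\<^sup>+I. emeasure m2 I \<partial>count_space F') = emeasure m2 (\<Union>((\<lambda>I. I) ` F'))"
    by (rule emeasure_UN_countable[OF _ cF' disj, symmetric]) (use Fb F'F s2 in auto)
  also have "emeasure m2 (\<Union>((\<lambda>I. I) ` F')) \<le> emeasure m2 Q"
  proof (rule emeasure_mono)
    show "\<Union>((\<lambda>I. I) ` F') \<subseteq> Q" using F'F F unfolding desc_def by auto
    show "Q \<in> sets m2" using cell_borel[OF Q] s2 by simp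
  qed
  finally show "emeasure m1 (\<Union>F) \<le> ennreal c * emeasure m2 Q" by (simp add: mult_left_mono)
qed

end


lemma ennreal_small_zero:
  fixes e :: ennreal
  assumes a: "0 \<le> a" and le: "\<And>n. e \<le> ennreal (a / real (Suc n))"
  shows "e = 0"
proof -
  have "e \<le> ennreal (a / real (Suc 0))" by (rule le)
  then have ne: "e \<noteq> top" using ennreal_neq_top top.not_eq_extremum by (metis ennreal_less_top le_less_trans)
  then obtain r where r: "e = ennreal r" "0 \<le> r" by (cases e) auto
  have rle: "\<And>n. r \<le> a / real (Suc n)"
  proof -
    fix n
    have "ennreal r \<le> ennreal (a / real (Suc n))" using le[of n] r by simp
    then show "r \<le> a / real (Suc n)" using a by (simp add: ennreal_le_iff)
  qed
  have "r \<le> 0"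
  proof (rule ccontr)
    assume "\<not> r \<le> 0"
    then have rp: "0 < r" by simp
    obtain n where n: "a / r < real n" using reals_Archimedean2 by blast
    have "a < real n * r" using n rp by (simp add: field_simps)
    also have "\<dots> \<le> real (Suc n) * r" using rp by simp
    finally have "a / real (Suc n) < r" by (simp add: field_simps)
    then show False using rle[of n] by simp
  qed
  then show ?thesis using r by simp
qed

lemma AE_transfer:
  assumes sa: "sets ma = sets mu" and dec: "\<And>A. A \<in> sets mu \<Longrightarrow> emeasure ma A \<le> emeasure mu A"
    and ae: "AE x in mu. P x"
  shows "AE x in ma. P x"
proof -
  obtain N where N: "{x \<in> space mu. \<not> P x} \<subseteq> N" "emeasure mu N = 0" "N \<in> sets mu"
    using ae by (auto elim!: AE_E)
  have sp: "space ma = space mu" by (rule sets_eq_imp_space_eq[OF sa])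
  have "emeasure ma N \<le> emeasure mu N" by (rule dec[OF N(3)])
  then have z: "emeasure ma N = 0" using N(2) by simp
  show ?thesis
  proof (rule AE_I[of _ _ N])
    show "{x \<in> space ma. \<not> P x} \<subseteq> N" using N(1) sp by simp
    show "emeasure ma N = 0" by (rule z)
    show "N \<in> sets ma" using N(3) sa by simp
  qed
qed

context dyad begin

definition goodn :: "real measure \<Rightarrow> real measure \<Rightarrow> nat \<Rightarrow> real set \<Rightarrow> bool" where
  "goodn mu nu n I \<longleftrightarrow> 0 < measure nu I \<and> 1 / real (Suc n) \<le> measure mu I / measure nu I
      \<and> measure mu I / measure nu I \<le> real (Suc n)"

definition Gn :: "real measure \<Rightarrow> real measure \<Rightarrow> real set \<Rightarrow> nat \<Rightarrow> real set" where
  "Gn mu nu Q n = {x \<in> Q. \<forall>k I. I \<in> D k \<longrightarrow> x \<in> I \<longrightarrow> goodn mu nu n I}"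

lemma Gn_AE:
  assumes rmu: "radon_measure mu" and rnu: "radon_measure nu" and C1: "1 \<le> C"
    and dbl: "\<And>k J P. J \<in> D (Suc k) \<Longrightarrow> P \<in> D k \<Longrightarrow> J \<subseteq> P \<Longrightarrow> measure nu P \<le> C * measure nu J"
    and Q: "Q \<in> D 0"
  shows "AE x in mu. x \<in> Gn mu nu Q n \<longrightarrow> square_function D mu nu x < \<infinity>"
proof (cases "goodn mu nu n Q")
  case False
  have "Gn mu nu Q n = {}"
  proof (rule ccontr)
    assume "Gn mu nu Q n \<noteq> {}"
    then obtain x where "x \<in> Gn mu nu Q n" by blast
    then have "x \<in> Q" "goodn mu nu n Q" using Q unfolding Gn_def by auto
    then show False using False by simp
  qed
  then show ?thesis by simp
next
  case True
  interpret L: mainloc D mu nu Q C "1 / real (Suc n)" "real (Suc n)"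
  proof (unfold_locales)
    show "radon_measure mu" "radon_measure nu" "1 \<le> C" "Q \<in> D 0" by (fact rmu rnu C1 Q)+
    show "\<And>k J P. J \<in> D (Suc k) \<Longrightarrow> P \<in> D k \<Longrightarrow> J \<subseteq> P \<Longrightarrow> measure nu P \<le> C * measure nu J" by (rule dbl)
    show "0 < 1 / real (Suc n)" by simp
    show "1 / real (Suc n) \<le> real (Suc n)" by (simp add: field_simps)
    show "0 < measure nu Q" "1 / real (Suc n) \<le> measure mu Q / measure nu Q" "measure mu Q / measure nu Q \<le> real (Suc n)"
      using True unfolding goodn_def by auto
  qed
  have sub: "Gn mu nu Q n \<subseteq> L.G" unfolding Gn_def L.G_def L.good_def L.r_def goodn_def by auto
  show ?thesis
    apply (rule AE_mp[OF L.main_local])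
    apply (rule AE_I2)
    using sub by blast
qed

end


context dyad begin

lemma cell_in_Q: assumes Q: "Q \<in> D 0" and I: "I \<in> D k" and x: "x \<in> I" and xQ: "x \<in> Q"
  shows "I \<in> desc 0 Q k"
proof -
  obtain P where P: "P \<in> D 0" "I \<subseteq> P" using anc_ex'[OF I, of 0] by auto
  have "P = Q" by (rule uniq[OF P(1) Q]) (use P x xQ in auto)
  then show ?thesis using P I unfolding desc_def by auto
qed

lemma cover_AE:
  assumes rmu: "radon_measure mu" and rnu: "radon_measure nu" and Q: "Q \<in> D 0"
    and sa: "sets ma = sets borel" and ac: "absolutely_continuous nu ma"
    and dec: "\<And>A. A \<in> sets borel \<Longrightarrow> emeasure ma A \<le> emeasure mu A"
  shows "AE x in ma. x \<in> Q \<longrightarrow> (\<exists>n. x \<in> Gn mu nu Q n)"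
proof -
  define cQ where "cQ = (\<Union>k. desc 0 Q k)"
  define B0 where "B0 = \<Union>{I\<in>cQ. measure nu I = 0}"
  define L where "L n = \<Union>{I\<in>cQ. 0 < measure nu I \<and> measure mu I / measure nu I < 1 / real (Suc n)}" for n
  define H where "H n = \<Union>{I\<in>cQ. 0 < measure nu I \<and> real (Suc n) < measure mu I / measure nu I}" for n
  have sn: "sets nu = sets borel" by (rule sets_radon[OF rnu])
  have sm: "sets mu = sets borel" by (rule sets_radon[OF rmu])
  have fQnu: "emeasure nu Q = ennreal (measure nu Q)"
    by (rule emeasure_eq_ennreal_measure) (use cell_fin[OF rnu Q] in simp)
  have fQmu: "emeasure mu Q = ennreal (measure mu Q)"
    by (rule emeasure_eq_ennreal_measure) (use cell_fin[OF rmu Q] in simp)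
  have B0c: "B0 \<in> sets borel" "emeasure nu B0 \<le> ennreal 0 * emeasure nu Q"
    unfolding B0_def by (rule covering[OF rnu rnu Q]; auto simp: cQ_def)+
  have B0n: "B0 \<in> null_sets ma"
  proof -
    have "B0 \<in> null_sets nu" using B0c sn by (simp add: null_sets_def)
    then show ?thesis using ac unfolding absolutely_continuous_def by blast
  qed
  have Lc: "\<And>n. L n \<in> sets borel \<and> emeasure mu (L n) \<le> ennreal (1 / real (Suc n)) * emeasure nu Q"
  proof -
    fix n
    have le: "\<And>I. I \<in> {I\<in>cQ. 0 < measure nu I \<and> measure mu I / measure nu I < 1 / real (Suc n)} \<Longrightarrow>
        measure mu I \<le> 1 / real (Suc n) * measure nu I"
      by (auto simp: field_simps)
    have sub: "{I\<in>cQ. 0 < measure nu I \<and> measure mu I / measure nu I < 1 / real (Suc n)} \<subseteq> (\<Union>k. desc 0 Q k)"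
      unfolding cQ_def by blast
    have c0: "0 \<le> 1 / real (Suc n)" by simp
    show "L n \<in> sets borel \<and> emeasure mu (L n) \<le> ennreal (1 / real (Suc n)) * emeasure nu Q"
      unfolding L_def using covering[OF rmu rnu Q sub c0 le] by blast
  qed
  define BL where "BL = (\<Inter>n. L n)"
  have BLs: "BL \<in> sets borel" unfolding BL_def using Lc by (intro sets.countable_INT) auto
  have "emeasure mu BL = 0"
  proof (rule ennreal_small_zero[of "measure nu Q"])
    fix n
    have "emeasure mu BL \<le> emeasure mu (L n)" unfolding BL_def
      using Lc sm by (intro emeasure_mono) auto
    also have "\<dots> \<le> ennreal (1 / real (Suc n)) * emeasure nu Q" using Lc by blast
    also have "\<dots> = ennreal (measure nu Q / real (Suc n))" unfolding fQnu by (simp add: ennreal_mult[symmetric])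
    finally show "emeasure mu BL \<le> ennreal (measure nu Q / real (Suc n))" .
  qed simp
  then have BLn: "BL \<in> null_sets ma"
    using dec[OF BLs] BLs sa by (simp add: null_sets_def)
  have Hc: "\<And>n. H n \<in> sets borel \<and> emeasure nu (H n) \<le> ennreal (1 / real (Suc n)) * emeasure mu Q"
  proof -
    fix n
    have le: "\<And>I. I \<in> {I\<in>cQ. 0 < measure nu I \<and> real (Suc n) < measure mu I / measure nu I} \<Longrightarrow>
        measure nu I \<le> 1 / real (Suc n) * measure mu I"
    proof -
      fix I assume "I \<in> {I\<in>cQ. 0 < measure nu I \<and> real (Suc n) < measure mu I / measure nu I}"
      then have a: "0 < measure nu I" "real (Suc n) < measure mu I / measure nu I" by auto
      then have "real (Suc n) * measure nu I < measure mu I" by (simp add: field_simps)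
      then show "measure nu I \<le> 1 / real (Suc n) * measure mu I" by (simp add: field_simps)
    qed
    have sub: "{I\<in>cQ. 0 < measure nu I \<and> real (Suc n) < measure mu I / measure nu I} \<subseteq> (\<Union>k. desc 0 Q k)"
      unfolding cQ_def by blast
    have c0: "0 \<le> 1 / real (Suc n)" by simp
    show "H n \<in> sets borel \<and> emeasure nu (H n) \<le> ennreal (1 / real (Suc n)) * emeasure mu Q"
      unfolding H_def using covering[OF rnu rmu Q sub c0 le] by blast
  qed
  define BH where "BH = (\<Inter>n. H n)"
  have BHs: "BH \<in> sets borel" unfolding BH_def using Hc by (intro sets.countable_INT) auto
  have "emeasure nu BH = 0"
  proof (rule ennreal_small_zero[of "measure mu Q"])
    fix n
    have "emeasure nu BH \<le> emeasure nu (H n)" unfolding BH_def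
      using Hc sn by (intro emeasure_mono) auto
    also have "\<dots> \<le> ennreal (1 / real (Suc n)) * emeasure mu Q" using Hc by blast
    also have "\<dots> = ennreal (measure mu Q / real (Suc n))" unfolding fQmu by (simp add: ennreal_mult[symmetric])
    finally show "emeasure nu BH \<le> ennreal (measure mu Q / real (Suc n))" .
  qed simp
  then have BHn: "BH \<in> null_sets ma"
  proof -
    assume "emeasure nu BH = 0"
    then have "BH \<in> null_sets nu" using BHs sn by (simp add: null_sets_def)
    then show ?thesis using ac unfolding absolutely_continuous_def by blast
  qed
  have Lmono: "\<And>n m. n \<le> m \<Longrightarrow> L m \<subseteq> L n"
  proof -
    fix n m :: nat assume nm: "n \<le> m"
    have "1 / real (Suc m) \<le> 1 / real (Suc n)" using nm by (simp add: frac_le)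
    then show "L m \<subseteq> L n" unfolding L_def by (force intro: less_le_trans)
  qed
  have Hmono: "\<And>n m. n \<le> m \<Longrightarrow> H m \<subseteq> H n"
  proof -
    fix n m :: nat assume nm: "n \<le> m"
    have "real (Suc n) \<le> real (Suc m)" using nm by simp
    then show "H m \<subseteq> H n" unfolding H_def by (force intro: le_less_trans)
  qed
  have incl: "{x \<in> space ma. \<not> (x \<in> Q \<longrightarrow> (\<exists>n. x \<in> Gn mu nu Q n))} \<subseteq> B0 \<union> BL \<union> BH"
  proof
    fix x assume "x \<in> {x \<in> space ma. \<not> (x \<in> Q \<longrightarrow> (\<exists>n. x \<in> Gn mu nu Q n))}"
    then have xQ: "x \<in> Q" and nG: "\<And>n. x \<notin> Gn mu nu Q n" by auto
    have each: "\<And>n. x \<in> B0 \<or> x \<in> L n \<or> x \<in> H n"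
    proof -
      fix n
      from nG[of n] xQ obtain k I where I: "I \<in> D k" "x \<in> I" "\<not> goodn mu nu n I"
        unfolding Gn_def by blast
      have IcQ: "I \<in> cQ" unfolding cQ_def using cell_in_Q[OF Q I(1) I(2) xQ] by blast
      show "x \<in> B0 \<or> x \<in> L n \<or> x \<in> H n"
      proof (cases "0 < measure nu I")
        case False
        then have "measure nu I = 0" using measure_nonneg[of nu I] by linarith
        then have "x \<in> B0" unfolding B0_def using IcQ I(2) by blast
        then show ?thesis by simp
      next
        case True
        show ?thesis
        proof (cases "measure mu I / measure nu I < 1 / real (Suc n)")
          case True2: True
          then have "x \<in> L n" unfolding L_def using IcQ I(2) True by blast
          then show ?thesis by simp
        next
          case False2: False
          then have "real (Suc n) < measure mu I / measure nu I"
            using I(3) True unfolding goodn_def by auto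
          then have "x \<in> H n" unfolding H_def using IcQ I(2) True by blast
          then show ?thesis by simp
        qed
      qed
    qed
    show "x \<in> B0 \<union> BL \<union> BH"
    proof (cases "x \<in> B0")
      case True then show ?thesis by simp
    next
      case nB: False
      show ?thesis
      proof (cases "\<forall>n. x \<in> L n")
        case True then show ?thesis unfolding BL_def by simp
      next
        case False
        then obtain n0 where n0: "x \<notin> L n0" by blast
        have "\<And>n. x \<in> H n"
        proof -
          fix n
          let ?m = "max n n0"
          have "x \<notin> L ?m" using n0 Lmono[of n0 ?m] by auto
          then have "x \<in> H ?m" using each[of ?m] nB by blast
          then show "x \<in> H n" using Hmono[of n ?m] by auto
        qed
        then show ?thesis unfolding BH_def by simp
      qed
    qed
  qed
  have "B0 \<union> BL \<union> BH \<in> null_sets ma" using B0n BLn BHn by auto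
  then show ?thesis using incl by (rule AE_I')
qed

lemma countable_D0: "countable (D 0)"
proof -
  have inj: "inj_on (\<lambda>Q. \<lfloor>Inf Q\<rfloor>) (D 0)"
  proof (rule inj_onI)
    fix Q1 Q2 assume Q1: "Q1 \<in> D 0" and Q2: "Q2 \<in> D 0" and e: "\<lfloor>Inf Q1\<rfloor> = \<lfloor>Inf Q2\<rfloor>"
    have e1: "Q1 = {Inf Q1..<Inf Q1 + 1}" using cell_Inf[OF Q1] by simp
    have e2: "Q2 = {Inf Q2..<Inf Q2 + 1}" using cell_Inf[OF Q2] by simp
    have d: "\<bar>Inf Q1 - Inf Q2\<bar> < 1" using e by linarith
    show "Q1 = Q2"
    proof (cases "Inf Q1 \<le> Inf Q2")
      case True
      have "Inf Q2 \<in> Q1" using True d by (subst e1) auto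
      moreover have "Inf Q2 \<in> Q2" by (rule Inf_in[OF Q2])
      ultimately show ?thesis by (rule uniq[OF Q1 Q2])
    next
      case False
      have "Inf Q1 \<in> Q2" using False d by (subst e2) auto
      moreover have "Inf Q1 \<in> Q1" by (rule Inf_in[OF Q1])
      ultimately show ?thesis by (intro uniq[OF Q1 Q2]) 
    qed
  qed
  have "countable ((\<lambda>Q. \<lfloor>Inf Q\<rfloor>) ` D 0)" by simp
  then show ?thesis using inj by (rule countable_image_inj_on)
qed

end


theorem mainTheorem10:
  fixes D :: "nat \<Rightarrow> real set set" and mu nu ma ms :: "real measure"
  assumes "dyadic_system D"
    and "radon_measure mu" and "radon_measure nu"
    and "emeasure mu UNIV < \<infinity>"
    and "dyadically_doubling D nu"
    and "lebesgue_decomposition nu mu ma ms"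
  shows "AE x in ma. square_function D mu nu x < \<infinity>"
proof -
  interpret dyad D using assms(1) by (rule dyad.intro)
  note rmu = assms(2) and rnu = assms(3)
  obtain C0 where C0: "\<forall>k. \<forall>I\<in>D (Suc k). \<forall>J\<in>D k. I \<subseteq> J \<longrightarrow> emeasure nu J \<le> ennreal C0 * emeasure nu I"
    using assms(5) unfolding dyadically_doubling_def by blast
  define C where "C = max C0 1"
  have C1: "1 \<le> C" unfolding C_def by simp
  have dbl: "\<And>k J P. J \<in> D (Suc k) \<Longrightarrow> P \<in> D k \<Longrightarrow> J \<subseteq> P \<Longrightarrow> measure nu P \<le> C * measure nu J"
  proof -
    fix k J P assume J: "J \<in> D (Suc k)" and P: "P \<in> D k" and JP: "J \<subseteq> P"
    have eJ: "emeasure nu J = ennreal (measure nu J)"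
      by (rule emeasure_eq_ennreal_measure) (use cell_fin[OF rnu J] in simp)
    have eP: "emeasure nu P = ennreal (measure nu P)"
      by (rule emeasure_eq_ennreal_measure) (use cell_fin[OF rnu P] in simp)
    have "emeasure nu P \<le> ennreal C0 * emeasure nu J" using C0 J P JP by blast
    also have "\<dots> \<le> ennreal C * emeasure nu J"
      unfolding C_def by (intro mult_right_mono ennreal_leI) auto
    also have "\<dots> = ennreal (C * measure nu J)" unfolding eJ using C1 by (simp add: ennreal_mult)
    finally have "ennreal (measure nu P) \<le> ennreal (C * measure nu J)" unfolding eP .
    then show "measure nu P \<le> C * measure nu J" using C1 by (simp add: ennreal_le_iff)
  qed
  have sa: "sets ma = sets borel" and ac: "absolutely_continuous nu ma"
    and add: "\<And>A::real set. A \<in> sets borel \<Longrightarrow> emeasure mu A = emeasure ma A + emeasure ms A"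
    using assms(6) unfolding lebesgue_decomposition_def by auto
  have dec: "\<And>A::real set. A \<in> sets borel \<Longrightarrow> emeasure ma A \<le> emeasure mu A"
  proof -
    fix A :: "real set" assume A: "A \<in> sets borel"
    have "emeasure ma A \<le> emeasure ma A + emeasure ms A" by (rule add_increasing2) simp_all
    then show "emeasure ma A \<le> emeasure mu A" using add[OF A] by simp
  qed
  have sm: "sets mu = sets borel" by (rule sets_radon[OF rmu])
  have loc: "\<And>Q. Q \<in> D 0 \<Longrightarrow> AE x in ma. x \<in> Q \<longrightarrow> square_function D mu nu x < \<infinity>"
  proof -
    fix Q assume Q: "Q \<in> D 0"
    have g: "\<And>n. AE x in ma. x \<in> Gn mu nu Q n \<longrightarrow> square_function D mu nu x < \<infinity>"
    proof -
      fix n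
      show "AE x in ma. x \<in> Gn mu nu Q n \<longrightarrow> square_function D mu nu x < \<infinity>"
      proof (rule AE_transfer)
        show "sets ma = sets mu" using sa sm by simp
        show "\<And>A. A \<in> sets mu \<Longrightarrow> emeasure ma A \<le> emeasure mu A" using dec sm by simp
        show "AE x in mu. x \<in> Gn mu nu Q n \<longrightarrow> square_function D mu nu x < \<infinity>"
          by (rule Gn_AE[OF rmu rnu C1 dbl Q])
      qed
    qed
    then have g': "AE x in ma. \<forall>n. x \<in> Gn mu nu Q n \<longrightarrow> square_function D mu nu x < \<infinity>"
      by (subst AE_all_countable) (intro allI g)
    have c: "AE x in ma. x \<in> Q \<longrightarrow> (\<exists>n. x \<in> Gn mu nu Q n)"
      by (rule cover_AE[OF rmu rnu Q sa ac dec])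
    from g' c show "AE x in ma. x \<in> Q \<longrightarrow> square_function D mu nu x < \<infinity>"
      by eventually_elim blast
  qed
  have all: "AE x in ma. \<forall>Q\<in>D 0. x \<in> Q \<longrightarrow> square_function D mu nu x < \<infinity>"
    by (rule AE_ball_countable'[OF loc countable_D0])
  show ?thesis
    apply (rule AE_mp[OF all])
    apply (rule AE_I2)
    using cover by blast
qed


end
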